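(* Consider the coupled stochastic approximation scheme described in the context. Suppose: (A1-1) (i) for every $\theta\in\Theta$, $f(\cdot;\theta)$ is strongly convex on $X$ with constant $\mu_x>0$ and continuously differentiable with $L_x$-Lipschitz gradient in $x$; (ii) for every $x\in X$, $\nabla_x f(x;\theta)$ is Lipschitz continuous in $\theta$ with constant $L_\theta$; (iii) $g$ is strongly convex on $\Theta$ with constant $\mu_\theta>0$ and continuously differentiable with $C_\theta$-Lipschitz gradient; (A2-1) $\sum_{k=0}^\infty\gamma_{k,x}=\infty$, $\sum_{k=0}^\infty\gamma_{k,x}^2<\infty$, and $\gamma_{k,\theta}=\gamma_{k,x}L_\theta^2/(\mu_x\mu_\theta)$ for all $k$; (A3) almost surely for all $k$: $\mathbb{E}[w^k\mid\mathcal{F}_k]=0$, $\mathbb{E}[v^k\mid\mathcal{F}_k]=0$, $\mathbb{E}[\|w^k\|^2\mid\mathcal{F}_k]\le\nu_x^2$, $\mathbb{E}[\|v^k\|^2\mid\mathcal{F}_k]\le\nu_\theta^2$. Then $x^k\to x^*$ and $\theta^k\to\theta^*$ almost surely as $k\to\infty$, where $\theta^*$ is the unique minimizer of $g$ over $\Theta$ and $x^*$ is the unique minimizer of $f(\cdot;\theta^* )$ over $X$.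
   Context: $X\subseteq\mathbb{R}^n$, $\Theta\subseteq\mathbb{R}^m$ are nonempty closed convex sets; $\xi$ is a random vector on $(\Omega,\mathcal{F}_x,\mathbb{P}_x)$ and $\eta$ on $(\Lambda,\mathcal{F}_\theta,\mathbb{P}_\theta)$, and one works on the product probability space. $f(x;\theta):=\mathbb{E}[f(x;\theta,\xi)]$ and $g(\theta):=\mathbb{E}[g(\theta;\eta)]$. $\Pi_K$ is the Euclidean projection onto $K$. Coupled scheme: given $x^0\in X$, $\theta^0\in\Theta$ and positive steplengths $\gamma_{k,x},\gamma_{k,\theta}$, for $k\ge0$: $x^{k+1}=\Pi_X\big(x^k-\gamma_{k,x}(\nabla_x f(x^k;\theta^k)+w^k)\big)$, $\theta^{k+1}=\Pi_\Theta\big(\theta^k-\gamma_{k,\theta}(\nabla_\theta g(\theta^k)+v^k)\big)$, where $w^k=\nabla_x f(x^k;\theta^k,\xi^k)-\nabla_x f(x^k;\theta^k)$ and $v^k=\nabla_\theta g(\theta^k;\eta^k)-\nabla_\theta g(\theta^k)$ with samples $\xi^k,\eta^k$. $\mathcal{F}_k$ is the $\sigma$-field generated by $(x^0,\theta^0)$ and $(w^l,v^l)$, $l=0,\dots,k-1$. *)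

theory Defs
  imports "HOL-Analysis.Analysis" "HOL-Probability.Probability"
begin

definition strongly_convex_on :: "'a::real_normed_vector set \<Rightarrow> ('a \<Rightarrow> real) \<Rightarrow> real \<Rightarrow> bool" where
  "strongly_convex_on S f mu \<longleftrightarrow> convex S \<and>
     (\<forall>x\<in>S. \<forall>y\<in>S. \<forall>t::real. 0 \<le> t \<and> t \<le> 1 \<longrightarrow>
        f ((1 - t) *\<^sub>R x + t *\<^sub>R y) \<le> (1 - t) * f x + t * f y - mu / 2 * t * (1 - t) * (norm (x - y))\<^sup>2)"

definition noise_filtration ::
  "'w measure \<Rightarrow> ('w \<Rightarrow> 'a::topological_space) \<Rightarrow> ('w \<Rightarrow> 'b::topological_space)
   \<Rightarrow> (nat \<Rightarrow> 'w \<Rightarrow> 'a) \<Rightarrow> (nat \<Rightarrow> 'w \<Rightarrow> 'b) \<Rightarrow> nat \<Rightarrow> 'w measure" where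
  "noise_filtration M x0 t0 w v k = sigma (space M)
     ({x0 -` A \<inter> space M | A. A \<in> sets borel} \<union> {t0 -` A \<inter> space M | A. A \<in> sets borel}
      \<union> (\<Union>l\<in>{..<k}. {w l -` A \<inter> space M | A. A \<in> sets borel} \<union> {v l -` A \<inter> space M | A. A \<in> sets borel}))"

end

theory Submission
  imports Defs
begin

lemma dir_deriv:
  fixes h :: "'a::euclidean_space \<Rightarrow> real"
  assumes "(h has_derivative (\<lambda>v. G \<bullet> v)) (at x)"
  shows "((\<lambda>t. (h (x + t *\<^sub>R u) - h x) / t) \<longlongrightarrow> G \<bullet> u) (at_right 0)"
proof -
  have d1: "((\<lambda>t::real. x + t *\<^sub>R u) has_derivative (\<lambda>s. s *\<^sub>R u)) (at 0)"
    by (auto intro!: derivative_eq_intros)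
  have "((\<lambda>t. h (x + t *\<^sub>R u)) has_derivative (\<lambda>s. G \<bullet> (s *\<^sub>R u))) (at 0)"
    using has_derivative_compose[OF d1, of h "\<lambda>v. G \<bullet> v"] assms by (simp add: o_def)
  moreover have eq: "(\<lambda>s. G \<bullet> (s *\<^sub>R u)) = (*) (G \<bullet> u)" by (auto simp: fun_eq_iff)
  ultimately have "((\<lambda>t. h (x + t *\<^sub>R u)) has_field_derivative (G \<bullet> u)) (at 0)"
    unfolding has_field_derivative_def by metis
  then have "((\<lambda>t. (h (x + t *\<^sub>R u) - h x) / t) \<longlongrightarrow> G \<bullet> u) (at 0)"
    by (simp add: has_field_derivative_iff)
  then show ?thesis by (rule tendsto_mono[rotated]) (simp add: at_le)
qed

lemma sc_first_order:
  fixes h :: "'a::euclidean_space \<Rightarrow> real"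
  assumes sc: "strongly_convex_on S h mu"
    and d: "(h has_derivative (\<lambda>v. G \<bullet> v)) (at x)"
    and xS: "x \<in> S" and yS: "y \<in> S"
  shows "h y \<ge> h x + G \<bullet> (y - x) + mu / 2 * (norm (y - x))\<^sup>2"
proof -
  let ?q = "\<lambda>t. (h (x + t *\<^sub>R (y - x)) - h x) / t"
  have lim: "(?q \<longlongrightarrow> G \<bullet> (y - x)) (at_right 0)" by (rule dir_deriv[OF d])
  have lim2: "((\<lambda>t. h y - h x - mu / 2 * (1 - t) * (norm (x - y))\<^sup>2) \<longlongrightarrow>
      h y - h x - mu / 2 * (1 - 0) * (norm (x - y))\<^sup>2) (at_right 0)"
    by (intro tendsto_intros)
  have ev: "eventually (\<lambda>t. ?q t \<le> h y - h x - mu / 2 * (1 - t) * (norm (x - y))\<^sup>2) (at_right 0)"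
    unfolding eventually_at_right_field
  proof (intro exI[of _ 1] conjI allI impI; (simp only: zero_less_one)?)
    fix t :: real assume t0: "0 < t" and t1: "t < 1"
    note t = t0 t1
    have "h ((1 - t) *\<^sub>R x + t *\<^sub>R y) \<le> (1 - t) * h x + t * h y - mu / 2 * t * (1 - t) * (norm (x - y))\<^sup>2"
      using sc xS yS t unfolding strongly_convex_on_def by auto
    moreover have "(1 - t) *\<^sub>R x + t *\<^sub>R y = x + t *\<^sub>R (y - x)" by (simp add: algebra_simps)
    ultimately have "h (x + t *\<^sub>R (y - x)) - h x \<le> t * (h y - h x - mu / 2 * (1 - t) * (norm (x - y))\<^sup>2)"
      by (simp add: algebra_simps)
    then show "?q t \<le> h y - h x - mu / 2 * (1 - t) * (norm (x - y))\<^sup>2"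
      using t by (simp add: divide_le_eq mult.commute)
  qed
  have "G \<bullet> (y - x) \<le> h y - h x - mu / 2 * (1 - 0) * (norm (x - y))\<^sup>2"
    by (rule tendsto_le[OF _ lim2 lim ev]) simp
  then show ?thesis by (simp add: norm_minus_commute)
qed

lemma sc_monotone:
  fixes h :: "'a::euclidean_space \<Rightarrow> real"
  assumes sc: "strongly_convex_on S h mu"
    and dx: "(h has_derivative (\<lambda>v. G x \<bullet> v)) (at x)"
    and dy: "(h has_derivative (\<lambda>v. G y \<bullet> v)) (at y)"
    and xS: "x \<in> S" and yS: "y \<in> S"
  shows "(G x - G y) \<bullet> (x - y) \<ge> mu * (norm (x - y))\<^sup>2"
proof -
  have 1: "h y \<ge> h x + G x \<bullet> (y - x) + mu / 2 * (norm (y - x))\<^sup>2"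
    by (rule sc_first_order[OF sc dx xS yS])
  have 2: "h x \<ge> h y + G y \<bullet> (x - y) + mu / 2 * (norm (x - y))\<^sup>2"
    by (rule sc_first_order[OF sc dy yS xS])
  have "G x \<bullet> (y - x) = - (G x \<bullet> (x - y))" by (simp add: inner_diff_right)
  with 1 2 show ?thesis by (simp add: norm_minus_commute inner_diff_left)
qed

lemma min_VI:
  fixes h :: "'a::euclidean_space \<Rightarrow> real"
  assumes cS: "convex S" and d: "(h has_derivative (\<lambda>v. G \<bullet> v)) (at x)"
    and xS: "x \<in> S" and yS: "y \<in> S" and mn: "\<forall>z\<in>S. h x \<le> h z"
  shows "G \<bullet> (y - x) \<ge> 0"
proof -
  let ?q = "\<lambda>t. (h (x + t *\<^sub>R (y - x)) - h x) / t"
  have lim: "(?q \<longlongrightarrow> G \<bullet> (y - x)) (at_right 0)" by (rule dir_deriv[OF d])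
  have ev: "eventually (\<lambda>t. 0 \<le> ?q t) (at_right 0)"
    unfolding eventually_at_right_field
  proof (intro exI[of _ 1] conjI allI impI; (simp only: zero_less_one)?)
    fix t :: real assume t0: "0 < t" and t1: "t < 1"
    note t = t0 t1
    have "(1 - t) *\<^sub>R x + t *\<^sub>R y \<in> S" using cS xS yS t by (simp add: convex_def)
    moreover have "(1 - t) *\<^sub>R x + t *\<^sub>R y = x + t *\<^sub>R (y - x)" by (simp add: algebra_simps)
    ultimately have "h x \<le> h (x + t *\<^sub>R (y - x))" using mn by metis
    then show "0 \<le> ?q t" using t by simp
  qed
  show ?thesis by (rule tendsto_le[OF _ lim tendsto_const ev]) simp
qed

lemma sc_min_exists:
  fixes h :: "'a::euclidean_space \<Rightarrow> real"
  assumes cl: "closed S" and cS: "convex S" and ne: "S \<noteq> {}"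
    and sc: "strongly_convex_on S h mu" and mu: "mu > 0"
    and d: "\<And>x. x \<in> S \<Longrightarrow> (h has_derivative (\<lambda>v. G x \<bullet> v)) (at x)"
  shows "\<exists>xs\<in>S. (\<forall>y\<in>S. h xs \<le> h y) \<and> (\<forall>y\<in>S. (\<forall>z\<in>S. h y \<le> h z) \<longrightarrow> y = xs)
     \<and> (\<forall>y\<in>S. G xs \<bullet> (y - xs) \<ge> 0)"
proof -
  obtain x0 where x0: "x0 \<in> S" using ne by auto
  define r where "r = 2 * norm (G x0) / mu"
  define K where "K = S \<inter> cball x0 r"
  have "compact K" unfolding K_def using cl by (intro closed_Int_compact) auto
  moreover have "K \<noteq> {}" unfolding K_def using x0 mu by (auto simp: r_def)
  moreover have "continuous_on K h"
    by (rule continuous_at_imp_continuous_on)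
       (auto simp: K_def intro!: has_derivative_continuous[OF d])
  ultimately obtain xs where xs: "xs \<in> K" "\<forall>y\<in>K. h xs \<le> h y"
    using continuous_attains_inf by blast
  have x0K: "x0 \<in> K" unfolding K_def using x0 mu by (auto simp: r_def)
  have mn: "\<forall>y\<in>S. h xs \<le> h y"
  proof
    fix y assume yS: "y \<in> S"
    show "h xs \<le> h y"
    proof (cases "y \<in> K")
      case True then show ?thesis using xs by auto
    next
      case False
      then have n: "norm (y - x0) > r" using yS by (auto simp: K_def dist_norm norm_minus_commute)
      have 1: "h y \<ge> h x0 + G x0 \<bullet> (y - x0) + mu / 2 * (norm (y - x0))\<^sup>2"
        by (rule sc_first_order[OF sc d[OF x0] x0 yS])
      have 2: "G x0 \<bullet> (y - x0) \<ge> - (norm (G x0) * norm (y - x0))"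
        using Cauchy_Schwarz_ineq2[of "G x0" "y - x0"] by (simp add: abs_le_iff)
      have "mu / 2 * norm (y - x0) \<ge> norm (G x0)"
        using n mu by (simp add: r_def field_simps)
      then have "mu / 2 * (norm (y - x0))\<^sup>2 \<ge> norm (G x0) * norm (y - x0)"
      proof -
        have "norm (G x0) * norm (y - x0) \<le> (mu / 2 * norm (y - x0)) * norm (y - x0)"
          by (rule mult_right_mono) (use \<open>mu / 2 * norm (y - x0) \<ge> norm (G x0)\<close> in auto)
        then show ?thesis by (simp add: power2_eq_square mult.assoc)
      qed
      with 1 2 have "h y \<ge> h x0" by linarith
      then show ?thesis using xs x0K by force
    qed
  qed
  have xsS: "xs \<in> S" using xs by (auto simp: K_def)
  have VI: "\<forall>y\<in>S. G xs \<bullet> (y - xs) \<ge> 0"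
    using min_VI[OF cS d[OF xsS] xsS _ mn] by blast
  have un: "\<forall>y\<in>S. (\<forall>z\<in>S. h y \<le> h z) \<longrightarrow> y = xs"
  proof (intro ballI impI)
    fix y assume yS: "y \<in> S" and ym: "\<forall>z\<in>S. h y \<le> h z"
    have "h y \<ge> h xs + G xs \<bullet> (y - xs) + mu / 2 * (norm (y - xs))\<^sup>2"
      by (rule sc_first_order[OF sc d[OF xsS] xsS yS])
    moreover have "h y \<le> h xs" using ym xsS by auto
    ultimately have "mu / 2 * (norm (y - xs))\<^sup>2 \<le> 0" using VI yS by force
    then have "(norm (y - xs))\<^sup>2 \<le> 0" using mu by (simp add: mult_le_0_iff)
    then show "y = xs" by simp
  qed
  show ?thesis using xsS mn un VI by blast
qed

lemma proj_fix:
  fixes xs :: "'a::euclidean_space"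
  assumes cS: "convex S" and cl: "closed S" and xsS: "xs \<in> S"
    and VI: "\<forall>y\<in>S. G \<bullet> (y - xs) \<ge> 0" and g: "\<gamma> \<ge> 0"
  shows "closest_point S (xs - \<gamma> *\<^sub>R G) = xs"
proof -
  have "\<forall>z\<in>S. dist (xs - \<gamma> *\<^sub>R G) xs \<le> dist (xs - \<gamma> *\<^sub>R G) z"
  proof
    fix z assume zS: "z \<in> S"
    have Gz: "G \<bullet> (z - xs) \<ge> 0" using VI zS by auto
    define u where "u = xs - z"
    have e: "(xs - \<gamma> *\<^sub>R G - z) \<bullet> (xs - \<gamma> *\<^sub>R G - z) = u \<bullet> u - 2 * \<gamma> * (G \<bullet> u) + (\<gamma> *\<^sub>R G) \<bullet> (\<gamma> *\<^sub>R G)"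
      unfolding u_def by (simp add: inner_diff_left inner_diff_right inner_commute algebra_simps)
    have "G \<bullet> u \<le> 0" using Gz unfolding u_def by (simp add: inner_diff_right)
    then have "- 2 * \<gamma> * (G \<bullet> u) \<ge> 0" using g by (simp add: mult_nonneg_nonpos)
    then have "(\<gamma> *\<^sub>R G) \<bullet> (\<gamma> *\<^sub>R G) \<le> (xs - \<gamma> *\<^sub>R G - z) \<bullet> (xs - \<gamma> *\<^sub>R G - z)"
      unfolding e using inner_ge_zero[of u] by linarith
    then have "norm (\<gamma> *\<^sub>R G) \<le> norm (xs - \<gamma> *\<^sub>R G - z)" unfolding norm_le .
    moreover have "dist (xs - \<gamma> *\<^sub>R G) xs = norm (\<gamma> *\<^sub>R G)" by (simp add: dist_norm)
    moreover have "dist (xs - \<gamma> *\<^sub>R G) z = norm (xs - \<gamma> *\<^sub>R G - z)" by (simp add: dist_norm)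
    ultimately show "dist (xs - \<gamma> *\<^sub>R G) xs \<le> dist (xs - \<gamma> *\<^sub>R G) z" by simp
  qed
  then show ?thesis using closest_point_unique[OF cS cl xsS] by metis
qed

lemma det_RS0:
  fixes V a s :: "nat \<Rightarrow> real"
  assumes V0: "\<And>k. V k \<ge> 0" and a0: "\<And>k. a k \<ge> 0" and na: "\<not> summable a"
    and ss: "summable s"
    and rec: "\<And>k. V (Suc k) \<le> V k - a k * V k + s k"
  shows "V \<longlonglongrightarrow> 0"
proof -
  define T where "T k = (\<Sum>j. s (j + k))" for k
  have Tsplit: "T (Suc k) = T k - s k" for k
  proof -
    have "summable (\<lambda>j. s (j + k))" using ss by simp
    from suminf_split_head[OF this] show ?thesis by (simp add: T_def)
  qed
  have Teq: "T k = suminf s - (\<Sum>i<k. s i)" for k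
    unfolding T_def by (rule suminf_minus_initial_segment[OF ss])
  have Tlim: "T \<longlonglongrightarrow> 0"
  proof -
    have "(\<lambda>k. suminf s - (\<Sum>i<k. s i)) \<longlonglongrightarrow> suminf s - suminf s"
      by (intro tendsto_intros summable_LIMSEQ[OF ss])
    moreover have "T = (\<lambda>k. suminf s - (\<Sum>i<k. s i))" using Teq by auto
    ultimately show ?thesis by simp
  qed
  have "Bseq T" using Tlim convergent_def convergent_imp_Bseq by blast
  then obtain B where B: "\<And>k. norm (T k) \<le> B" by (meson BseqE)
  define W where "W k = V k + T k" for k
  have Wstep: "W (Suc k) + a k * V k \<le> W k" for k
    using rec[of k] Tsplit[of k] by (simp add: W_def)
  have Wlow: "- B \<le> W k" for k
    using B[of k] V0[of k] by (simp add: W_def abs_le_iff)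
  have "decseq W"
  proof (rule decseq_SucI)
    fix k show "W (Suc k) \<le> W k" using Wstep[of k] mult_nonneg_nonneg[OF a0[of k] V0[of k]] by linarith
  qed
  then obtain L where WL: "W \<longlonglongrightarrow> L" using decseq_convergent[of W "-B"] Wlow by blast
  have VL: "V \<longlonglongrightarrow> L"
  proof -
    have "(\<lambda>k. W k - T k) \<longlonglongrightarrow> L - 0" by (intro tendsto_intros WL Tlim)
    then show ?thesis by (simp add: W_def)
  qed
  have L0: "L \<ge> 0" by (rule LIMSEQ_le_const[OF VL]) (use V0 in auto)
  have psum: "(\<Sum>k<n. a k * V k) \<le> W 0 - W n" for n
  proof (induction n)
    case 0 then show ?case by simp
  next
    case (Suc n) then show ?case using Wstep[of n] by simp
  qed
  have sumaV: "summable (\<lambda>k. a k * V k)"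
  proof (rule summableI_nonneg_bounded[where x = "W 0 + B"])
    fix n show "0 \<le> a n * V n" using mult_nonneg_nonneg[OF a0[of n] V0[of n]] .
    show "(\<Sum>k<n. a k * V k) \<le> W 0 + B" using psum[of n] Wlow[of n] by linarith
  qed
  have "L = 0"
  proof (rule ccontr)
    assume "L \<noteq> 0"
    then have Lp: "L / 2 < L" using L0 by simp
    have "eventually (\<lambda>k. L / 2 < V k) sequentially" by (rule order_tendstoD(1)[OF VL Lp])
    then obtain N where N: "\<And>k. k \<ge> N \<Longrightarrow> L / 2 < V k" by (auto simp: eventually_sequentially)
    have "summable (\<lambda>k. (2 / L) * (a k * V k))" by (rule summable_mult[OF sumaV])
    moreover have "norm (a k) \<le> (2 / L) * (a k * V k)" if "k \<ge> N" for k
    proof -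
      have "L < 2 * V k" using N[OF that] by simp
      then have "a k * L \<le> a k * (2 * V k)" using a0[of k] by (intro mult_left_mono) auto
      then show ?thesis using a0[of k] L0 \<open>L \<noteq> 0\<close> by (simp add: field_simps)
    qed
    ultimately have "summable a" by (rule summable_comparison_test')
    with na show False by simp
  qed
  with VL show ?thesis by simp
qed

lemma det_RS:
  fixes V \<gamma> \<xi> \<beta> :: "nat \<Rightarrow> real"
  assumes V0: "\<And>k. V k \<ge> 0" and g0: "\<And>k. \<gamma> k > 0" and c: "c > 0"
    and ng: "\<not> summable \<gamma>" and sq: "summable (\<lambda>k. (\<gamma> k)\<^sup>2)"
    and s1: "summable \<xi>" and s2: "summable \<beta>"
    and rec: "\<And>k. V (Suc k) \<le> V k - c * \<gamma> k * V k + K * (\<gamma> k)\<^sup>2 * V k + \<xi> k + \<beta> k"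
  shows "V \<longlonglongrightarrow> 0"
proof -
  have "(\<lambda>k. (\<gamma> k)\<^sup>2) \<longlonglongrightarrow> 0" by (rule summable_LIMSEQ_zero[OF sq])
  then have "(\<lambda>k. sqrt ((\<gamma> k)\<^sup>2)) \<longlonglongrightarrow> sqrt 0" by (rule tendsto_real_sqrt)
  moreover have "sqrt ((\<gamma> k)\<^sup>2) = \<gamma> k" for k using g0[of k] by simp
  ultimately have "(\<lambda>k. \<gamma> k) \<longlonglongrightarrow> 0" by simp
  moreover have "c / (2 * (\<bar>K\<bar> + 1)) > 0" using c by simp
  ultimately have "eventually (\<lambda>k. \<gamma> k < c / (2 * (\<bar>K\<bar> + 1))) sequentially"
    by (rule order_tendstoD(2))
  then obtain N where N: "\<And>k. k \<ge> N \<Longrightarrow> \<gamma> k < c / (2 * (\<bar>K\<bar> + 1))"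
    by (auto simp: eventually_sequentially)
  have step: "V (Suc (k + N)) \<le> V (k + N) - (c / 2 * \<gamma> (k + N)) * V (k + N) + (\<xi> (k + N) + \<beta> (k + N))" for k
  proof -
    let ?g = "\<gamma> (k + N)" and ?v = "V (k + N)"
    have "?g < c / (2 * (\<bar>K\<bar> + 1))" using N by simp
    then have "?g * (2 * (\<bar>K\<bar> + 1)) < c" by (simp add: field_simps)
    moreover have "?g * (2 * \<bar>K\<bar>) \<le> ?g * (2 * (\<bar>K\<bar> + 1))"
      using g0[of "k + N"] by (intro mult_left_mono) auto
    ultimately have "?g * (2 * \<bar>K\<bar>) \<le> c" by linarith
    then have "\<bar>K\<bar> * ?g \<le> c / 2" by (simp add: field_simps mult_ac)
    then have "\<bar>K\<bar> * ?g * ?g \<le> c / 2 * ?g" using g0[of "k + N"] by (intro mult_right_mono) auto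
    moreover have "K * ?g\<^sup>2 \<le> \<bar>K\<bar> * ?g * ?g"
      by (simp add: power2_eq_square mult.assoc mult_right_mono)
    ultimately have "K * ?g\<^sup>2 \<le> c / 2 * ?g" by linarith
    then have "K * ?g\<^sup>2 * ?v \<le> c / 2 * ?g * ?v" using V0 by (intro mult_right_mono) auto
    then show ?thesis using rec[of "k + N"] by simp
  qed
  have "(\<lambda>k. V (k + N)) \<longlonglongrightarrow> 0"
  proof (rule det_RS0[where a = "\<lambda>k. c / 2 * \<gamma> (k + N)" and s = "\<lambda>k. \<xi> (k + N) + \<beta> (k + N)"])
    show "\<And>k. 0 \<le> V (k + N)" using V0 by simp
    show "\<And>k. 0 \<le> c / 2 * \<gamma> (k + N)" using c g0 by (simp add: less_imp_le)
    show "\<not> summable (\<lambda>k. c / 2 * \<gamma> (k + N))"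
    proof
      assume "summable (\<lambda>k. c / 2 * \<gamma> (k + N))"
      then have "summable (\<lambda>k. (2 / c) * (c / 2 * \<gamma> (k + N)))" by (rule summable_mult)
      then have "summable (\<lambda>k. \<gamma> (k + N))" using c by simp
      then show False using ng by simp
    qed
    show "summable (\<lambda>k. \<xi> (k + N) + \<beta> (k + N))"
      using summable_add[OF s1 s2] by (simp add: summable_iff_shift[of "\<lambda>k. \<xi> k + \<beta> k"])
    show "\<And>k. V (Suc k + N) \<le> V (k + N) - c / 2 * \<gamma> (k + N) * V (k + N) + (\<xi> (k + N) + \<beta> (k + N))"
      using step by simp
  qed
  then show ?thesis by (rule LIMSEQ_offset)
qed

lemma sfs_space: "sigma_finite_subalgebra M F \<Longrightarrow> space F = space M"
  by (simp add: sigma_finite_subalgebra_def subalgebra_def)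

lemma sfs_meas: "sigma_finite_subalgebra M F \<Longrightarrow> f \<in> borel_measurable F \<Longrightarrow> f \<in> borel_measurable M"
  using measurable_from_subalg sigma_finite_subalgebra_def by blast

lemma filt_meas_mono:
  assumes sub: "\<And>k. sigma_finite_subalgebra M (F k)"
    and mono: "\<And>k. sets (F k) \<subseteq> sets (F (Suc k))"
    and jk: "j \<le> k" and f: "f \<in> borel_measurable (F j)"
  shows "f \<in> borel_measurable (F k)"
proof -
  have "sets (F j) \<subseteq> sets (F k)" using lift_Suc_mono_le[of "\<lambda>k. sets (F k)", OF mono jk] .
  then have "subalgebra (F k) (F j)" unfolding subalgebra_def using sfs_space[OF sub] by simp
  then show ?thesis using measurable_from_subalg f by blast
qed

lemma sq_int_mult:
  fixes f g :: "'w \<Rightarrow> real"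
  assumes "integrable M (\<lambda>x. (f x)\<^sup>2)" "integrable M (\<lambda>x. (g x)\<^sup>2)"
    and "f \<in> borel_measurable M" "g \<in> borel_measurable M"
  shows "integrable M (\<lambda>x. f x * g x)"
proof (rule Bochner_Integration.integrable_bound[where f = "\<lambda>x. (f x)\<^sup>2 + (g x)\<^sup>2"])
  show "integrable M (\<lambda>x. (f x)\<^sup>2 + (g x)\<^sup>2)" using assms by auto
  show "(\<lambda>x. f x * g x) \<in> borel_measurable M" using assms by (intro borel_measurable_times)
  show "AE x in M. norm (f x * g x) \<le> norm ((f x)\<^sup>2 + (g x)\<^sup>2)"
  proof (rule AE_I2)
    fix x
    have "0 \<le> (\<bar>f x\<bar> - \<bar>g x\<bar>)\<^sup>2" by simp
    then have "2 * \<bar>f x\<bar> * \<bar>g x\<bar> \<le> (f x)\<^sup>2 + (g x)\<^sup>2" by (simp add: power2_eq_square algebra_simps)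
    moreover have "norm ((f x)\<^sup>2 + (g x)\<^sup>2) = (f x)\<^sup>2 + (g x)\<^sup>2" by simp
    moreover have "norm (f x * g x) = \<bar>f x\<bar> * \<bar>g x\<bar>" by (simp add: abs_mult)
    moreover have "0 \<le> \<bar>f x\<bar> * \<bar>g x\<bar>" by simp
    ultimately show "norm (f x * g x) \<le> norm ((f x)\<^sup>2 + (g x)\<^sup>2)" by linarith
  qed
qed

lemma sq_int_add:
  fixes f g :: "'w \<Rightarrow> real"
  assumes "integrable M (\<lambda>x. (f x)\<^sup>2)" "integrable M (\<lambda>x. (g x)\<^sup>2)"
    and "f \<in> borel_measurable M" "g \<in> borel_measurable M"
  shows "integrable M (\<lambda>x. (f x + g x)\<^sup>2)"
proof -
  have "integrable M (\<lambda>x. (f x)\<^sup>2 + (g x)\<^sup>2 + 2 * f x * g x)"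
    using assms sq_int_mult[OF assms] by (auto simp: mult.assoc)
  then show ?thesis by (simp add: power2_sum)
qed

lemma orth:
  fixes \<zeta> Z :: "'w \<Rightarrow> real"
  assumes sub: "sigma_finite_subalgebra M F"
    and Zm: "Z \<in> borel_measurable F" and Zsq: "integrable M (\<lambda>x. (Z x)\<^sup>2)"
    and zm: "\<zeta> \<in> borel_measurable M" and zsq: "integrable M (\<lambda>x. (\<zeta> x)\<^sup>2)"
    and ce: "AE x in M. real_cond_exp M F \<zeta> x = 0"
  shows "integrable M (\<lambda>x. Z x * \<zeta> x)" "(\<integral>x. Z x * \<zeta> x \<partial>M) = 0"
proof -
  have ZM: "Z \<in> borel_measurable M" by (rule sfs_meas[OF sub Zm])
  show int: "integrable M (\<lambda>x. Z x * \<zeta> x)" by (rule sq_int_mult[OF Zsq zsq ZM zm])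
  have "(\<integral>x. Z x * \<zeta> x \<partial>M) = (\<integral>x. Z x * real_cond_exp M F \<zeta> x \<partial>M)"
    using sigma_finite_subalgebra.real_cond_exp_intg(2)[OF sub int Zm zm] by simp
  also have "\<dots> = (\<integral>x. 0 \<partial>M)"
    by (rule integral_cong_AE) (use ce ZM sub in auto)
  finally show "(\<integral>x. Z x * \<zeta> x \<partial>M) = 0" by simp
qed

lemma kolmogorov0:
  fixes M :: "'w measure" and F :: "nat \<Rightarrow> 'w measure" and \<zeta> :: "nat \<Rightarrow> 'w \<Rightarrow> real"
  assumes P: "prob_space M" and sub: "\<And>k. sigma_finite_subalgebra M (F k)"
    and mono: "\<And>k. sets (F k) \<subseteq> sets (F (Suc k))"
    and meas: "\<And>k. \<zeta> k \<in> borel_measurable (F (Suc k))"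
    and sq: "\<And>k. integrable M (\<lambda>\<omega>. (\<zeta> k \<omega>)\<^sup>2)"
    and ce: "\<And>k. AE \<omega> in M. real_cond_exp M (F k) (\<zeta> k) \<omega> = 0"
    and e: "\<epsilon> > 0"
  shows "measure M {\<omega>\<in>space M. \<exists>m\<le>N. \<epsilon> \<le> \<bar>\<Sum>j<m. \<zeta> j \<omega>\<bar>} \<le> (\<Sum>j<N. \<integral>\<omega>. (\<zeta> j \<omega>)\<^sup>2 \<partial>M) / \<epsilon>\<^sup>2"
proof -
  interpret prob_space M by fact
  have zM: "\<zeta> k \<in> borel_measurable M" for k using sfs_meas[OF sub meas] .
  have mle: "\<And>j k f. j \<le> k \<Longrightarrow> f \<in> borel_measurable (F j) \<Longrightarrow> f \<in> borel_measurable (F k)"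
    using filt_meas_mono[where M=M and F=F, OF sub mono] by blast
  define S where "S m \<omega> = (\<Sum>j<m. \<zeta> j \<omega>)" for m \<omega>
  define e where "e i \<omega> = (if \<bar>S i \<omega>\<bar> < \<epsilon> then 1 else (0::real))" for i \<omega>
  define p where "p j \<omega> = (\<Prod>i\<le>j. e i \<omega>)" for j \<omega>
  define T where "T n \<omega> = (\<Sum>j<n. \<zeta> j \<omega> * p j \<omega>)" for n \<omega>
  have SF: "S m \<in> borel_measurable (F m)" for m
    unfolding S_def by (rule borel_measurable_sum) (rule mle[OF _ meas]; simp)
  have eF: "e i \<in> borel_measurable (F i)" for i
  proof -
    note SF[measurable]
    show ?thesis unfolding e_def by measurable
  qed
  have pF: "p j \<in> borel_measurable (F j)" for j
    unfolding p_def by (rule borel_measurable_prod) (rule mle[OF _ eF]; simp)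
  have TF: "T n \<in> borel_measurable (F n)" for n
    unfolding T_def
  proof (rule borel_measurable_sum, rule borel_measurable_times)
    fix j assume "j \<in> {..<n}"
    then show "\<zeta> j \<in> borel_measurable (F n)" "p j \<in> borel_measurable (F n)"
      by (auto intro: mle[OF _ meas] mle[OF _ pF])
  qed
  have TM: "T n \<in> borel_measurable M" for n using sfs_meas[OF sub TF] .
  have pM: "p n \<in> borel_measurable M" for n using sfs_meas[OF sub pF] .
  have pchar: "p j \<omega> = (if \<forall>i\<le>j. \<bar>S i \<omega>\<bar> < \<epsilon> then 1 else 0)" for j \<omega>
  proof (induction j)
    case 0 then show ?case by (simp add: p_def e_def)
  next
    case (Suc j)
    have "p (Suc j) \<omega> = p j \<omega> * e (Suc j) \<omega>" by (simp add: p_def)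
    then show ?case using Suc by (auto simp: e_def le_Suc_eq)
  qed
  have p01: "p j \<omega> = 0 \<or> p j \<omega> = 1" for j \<omega> using pchar by simp
  have claim: "\<epsilon> \<le> \<bar>T N \<omega>\<bar>" if ex: "\<exists>m\<le>N. \<epsilon> \<le> \<bar>S m \<omega>\<bar>" for \<omega>
  proof -
    define m0 where "m0 = (LEAST m. \<epsilon> \<le> \<bar>S m \<omega>\<bar>)"
    have m0a: "\<epsilon> \<le> \<bar>S m0 \<omega>\<bar>" unfolding m0_def using ex by (meson LeastI)
    have m0N: "m0 \<le> N" unfolding m0_def using ex by (meson Least_le order_trans)
    have m0b: "\<bar>S i \<omega>\<bar> < \<epsilon>" if "i < m0" for i
      using not_less_Least[OF that[unfolded m0_def]] by (simp add: m0_def)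
    have pj: "p j \<omega> = (if j < m0 then 1 else 0)" for j
      using pchar[of j \<omega>] m0b m0a by (auto simp: not_less intro: m0b)
    have "T N \<omega> = (\<Sum>j\<in>{..<N}. if j \<in> {..<m0} then \<zeta> j \<omega> else 0)"
      unfolding T_def by (rule sum.cong) (auto simp: pj)
    also have "\<dots> = (\<Sum>j\<in>{..<N} \<inter> {..<m0}. \<zeta> j \<omega>)" by (simp add: sum.inter_restrict)
    also have "{..<N} \<inter> {..<m0} = {..<m0}" using m0N by auto
    finally have "T N \<omega> = S m0 \<omega>" by (simp add: S_def)
    with m0a show ?thesis by simp
  qed
  have mom: "integrable M (\<lambda>\<omega>. (T n \<omega>)\<^sup>2) \<and> (\<integral>\<omega>. (T n \<omega>)\<^sup>2 \<partial>M) \<le> (\<Sum>j<n. \<integral>\<omega>. (\<zeta> j \<omega>)\<^sup>2 \<partial>M)" for n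
  proof (induction n)
    case 0 then show ?case by (simp add: T_def)
  next
    case (Suc n)
    have IH1: "integrable M (\<lambda>\<omega>. (T n \<omega>)\<^sup>2)" and IH2: "(\<integral>\<omega>. (T n \<omega>)\<^sup>2 \<partial>M) \<le> (\<Sum>j<n. \<integral>\<omega>. (\<zeta> j \<omega>)\<^sup>2 \<partial>M)"
      using Suc by auto
    define Z where "Z \<omega> = T n \<omega> * p n \<omega>" for \<omega>
    have ZF: "Z \<in> borel_measurable (F n)" unfolding Z_def using TF pF by (intro borel_measurable_times)
    have ZM: "Z \<in> borel_measurable M" using sfs_meas[OF sub ZF] .
    have Zsq: "integrable M (\<lambda>\<omega>. (Z \<omega>)\<^sup>2)"
    proof (rule Bochner_Integration.integrable_bound[OF IH1])
      show "(\<lambda>\<omega>. (Z \<omega>)\<^sup>2) \<in> borel_measurable M" using ZM by (intro borel_measurable_power)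
      show "AE \<omega> in M. norm ((Z \<omega>)\<^sup>2) \<le> norm ((T n \<omega>)\<^sup>2)"
      proof (rule AE_I2)
        fix \<omega> show "norm ((Z \<omega>)\<^sup>2) \<le> norm ((T n \<omega>)\<^sup>2)"
          using p01[of n \<omega>] by (auto simp: Z_def)
      qed
    qed
    have o1: "integrable M (\<lambda>\<omega>. Z \<omega> * \<zeta> n \<omega>)" and o2: "(\<integral>\<omega>. Z \<omega> * \<zeta> n \<omega> \<partial>M) = 0"
      using orth[OF sub ZF Zsq zM sq ce] by auto
    have zp: "integrable M (\<lambda>\<omega>. (\<zeta> n \<omega> * p n \<omega>)\<^sup>2)"
    proof (rule Bochner_Integration.integrable_bound[OF sq[of n]])
      show "(\<lambda>\<omega>. (\<zeta> n \<omega> * p n \<omega>)\<^sup>2) \<in> borel_measurable M" using zM pM by measurable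
      show "AE \<omega> in M. norm ((\<zeta> n \<omega> * p n \<omega>)\<^sup>2) \<le> norm ((\<zeta> n \<omega>)\<^sup>2)"
      proof (rule AE_I2)
        fix \<omega> show "norm ((\<zeta> n \<omega> * p n \<omega>)\<^sup>2) \<le> norm ((\<zeta> n \<omega>)\<^sup>2)"
          using p01[of n \<omega>] by auto
      qed
    qed
    have eq: "(T (Suc n) \<omega>)\<^sup>2 = (T n \<omega>)\<^sup>2 + 2 * (Z \<omega> * \<zeta> n \<omega>) + (\<zeta> n \<omega> * p n \<omega>)\<^sup>2" for \<omega>
      by (simp add: T_def Z_def power2_sum algebra_simps)
    have i1: "integrable M (\<lambda>\<omega>. (T (Suc n) \<omega>)\<^sup>2)" unfolding eq using IH1 o1 zp by auto
    have "(\<integral>\<omega>. (T (Suc n) \<omega>)\<^sup>2 \<partial>M) = (\<integral>\<omega>. (T n \<omega>)\<^sup>2 \<partial>M) + 2 * (\<integral>\<omega>. Z \<omega> * \<zeta> n \<omega> \<partial>M)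
        + (\<integral>\<omega>. (\<zeta> n \<omega> * p n \<omega>)\<^sup>2 \<partial>M)"
      unfolding eq using IH1 o1 zp by simp
    also have "(\<integral>\<omega>. (\<zeta> n \<omega> * p n \<omega>)\<^sup>2 \<partial>M) \<le> (\<integral>\<omega>. (\<zeta> n \<omega>)\<^sup>2 \<partial>M)"
    proof (rule integral_mono[OF zp sq])
      fix \<omega> show "(\<zeta> n \<omega> * p n \<omega>)\<^sup>2 \<le> (\<zeta> n \<omega>)\<^sup>2" using p01[of n \<omega>] by auto
    qed
    finally have "(\<integral>\<omega>. (T (Suc n) \<omega>)\<^sup>2 \<partial>M) \<le> (\<Sum>j<Suc n. \<integral>\<omega>. (\<zeta> j \<omega>)\<^sup>2 \<partial>M)"
      using IH2 o2 by simp
    with i1 show ?case by simp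
  qed
  have sub1: "{\<omega>\<in>space M. \<exists>m\<le>N. \<epsilon> \<le> \<bar>\<Sum>j<m. \<zeta> j \<omega>\<bar>} \<subseteq> {\<omega>\<in>space M. \<epsilon>\<^sup>2 \<le> (T N \<omega>)\<^sup>2}"
  proof safe
    fix \<omega> m assume "\<omega> \<in> space M" "m \<le> N" "\<epsilon> \<le> \<bar>\<Sum>j<m. \<zeta> j \<omega>\<bar>"
    then have "\<epsilon> \<le> \<bar>T N \<omega>\<bar>" using claim[of \<omega>] by (auto simp: S_def)
    then show "\<epsilon>\<^sup>2 \<le> (T N \<omega>)\<^sup>2" using e by (simp add: abs_le_square_iff[symmetric])
  qed
  have setM: "{\<omega>\<in>space M. \<epsilon>\<^sup>2 \<le> (T N \<omega>)\<^sup>2} \<in> sets M"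
    using TM[of N] by measurable
  have "measure M {\<omega>\<in>space M. \<exists>m\<le>N. \<epsilon> \<le> \<bar>\<Sum>j<m. \<zeta> j \<omega>\<bar>} \<le> measure M {\<omega>\<in>space M. \<epsilon>\<^sup>2 \<le> (T N \<omega>)\<^sup>2}"
    by (rule finite_measure_mono[OF sub1 setM])
  also have "\<dots> \<le> (\<integral>\<omega>. (T N \<omega>)\<^sup>2 \<partial>M) / \<epsilon>\<^sup>2"
    by (rule integral_Markov_inequality_measure[where A = "space M"]) (use mom e in auto)
  also have "\<dots> \<le> (\<Sum>j<N. \<integral>\<omega>. (\<zeta> j \<omega>)\<^sup>2 \<partial>M) / \<epsilon>\<^sup>2"
    by (rule divide_right_mono) (use mom in auto)
  finally show ?thesis .
qed

lemma tail_lim: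
  fixes f :: "nat \<Rightarrow> real"
  assumes "summable f"
  shows "(\<lambda>n. \<Sum>j. f (j + n)) \<longlonglongrightarrow> 0"
proof -
  have "(\<lambda>k. suminf f - (\<Sum>i<k. f i)) \<longlonglongrightarrow> suminf f - suminf f"
    by (intro tendsto_intros summable_LIMSEQ[OF assms])
  moreover have "(\<lambda>n. \<Sum>j. f (j + n)) = (\<lambda>k. suminf f - (\<Sum>i<k. f i))"
    using suminf_minus_initial_segment[OF assms] by auto
  ultimately show ?thesis by simp
qed

lemma sum_shift_ivl: "sum f {n0..<n0 + q} = (\<Sum>j<q. f (j + n0))"
  for f :: "nat \<Rightarrow> real"
proof -
  have "sum f {0 + n0..<q + n0} = sum (f \<circ> plus n0) {0..<q}" by (rule sum.atLeastLessThan_shift_bounds)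
  then show ?thesis by (simp add: add.commute lessThan_atLeast0)
qed

lemma cauchy_tail:
  fixes f :: "nat \<Rightarrow> real"
  assumes H: "\<forall>k::nat. \<exists>n. \<forall>m. \<bar>\<Sum>j<m. f (j + n)\<bar> < 1 / Suc k"
  shows "summable f"
  unfolding summable_Cauchy
proof (intro allI impI)
  fix e :: real assume e: "0 < e"
  obtain k where k: "inverse (real (Suc k)) < e / 2" using reals_Archimedean[of "e / 2"] e by auto
  obtain n0 where n0: "\<And>m. \<bar>\<Sum>j<m. f (j + n0)\<bar> < 1 / Suc k" using H by blast
  have n0': "\<bar>sum f {n0..<n0 + q}\<bar> < e / 2" for q
    using n0[of q] k by (simp add: sum_shift_ivl inverse_eq_divide)
  show "\<exists>N. \<forall>m\<ge>N. \<forall>n. norm (sum f {m..<n}) < e"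
  proof (intro exI allI impI)
    fix m n assume m: "n0 \<le> m"
    show "norm (sum f {m..<n}) < e"
    proof (cases "n \<le> m")
      case True then show ?thesis using e by simp
    next
      case False
      have "sum f {n0..<n} - sum f {n0..<m} = sum f {m..<n}"
        by (rule sum_diff_nat_ivl) (use m False in auto)
      moreover have "\<bar>sum f {n0..<n}\<bar> < e / 2" using n0'[of "n - n0"] m False by simp
      moreover have "\<bar>sum f {n0..<m}\<bar> < e / 2" using n0'[of "m - n0"] m by simp
      ultimately show ?thesis by simp
    qed
  qed
qed

lemma mart_summable:
  fixes M :: "'w measure" and F :: "nat \<Rightarrow> 'w measure" and \<zeta> :: "nat \<Rightarrow> 'w \<Rightarrow> real"
  assumes P: "prob_space M" and sub: "\<And>k. sigma_finite_subalgebra M (F k)"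
    and mono: "\<And>k. sets (F k) \<subseteq> sets (F (Suc k))"
    and meas: "\<And>k. \<zeta> k \<in> borel_measurable (F (Suc k))"
    and sq: "\<And>k. integrable M (\<lambda>\<omega>. (\<zeta> k \<omega>)\<^sup>2)"
    and ce: "\<And>k. AE \<omega> in M. real_cond_exp M (F k) (\<zeta> k) \<omega> = 0"
    and sm: "summable (\<lambda>k. \<integral>\<omega>. (\<zeta> k \<omega>)\<^sup>2 \<partial>M)"
  shows "AE \<omega> in M. summable (\<lambda>k. \<zeta> k \<omega>)"
proof -
  interpret prob_space M by fact
  have zM[measurable]: "\<zeta> k \<in> borel_measurable M" for k using sfs_meas[OF sub meas] .
  define q where "q k = (\<integral>\<omega>. (\<zeta> k \<omega>)\<^sup>2 \<partial>M)" for k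
  have q0: "q k \<ge> 0" for k unfolding q_def by simp
  have smq: "summable q" using sm unfolding q_def .
  define tl where "tl n = (\<Sum>j. q (j + n))" for n
  have tl0: "tl \<longlonglongrightarrow> 0" unfolding tl_def by (rule tail_lim[OF smq])
  have good: "AE \<omega> in M. \<exists>n. \<forall>m. \<bar>\<Sum>j<m. \<zeta> (j + n) \<omega>\<bar> < \<epsilon>" if e: "\<epsilon> > 0" for \<epsilon>
  proof -
    define A where "A n N = {\<omega>\<in>space M. \<exists>m\<le>N. \<epsilon> \<le> \<bar>\<Sum>j<m. \<zeta> (j + n) \<omega>\<bar>}" for n N
    define E where "E n = {\<omega>\<in>space M. \<exists>m. \<epsilon> \<le> \<bar>\<Sum>j<m. \<zeta> (j + n) \<omega>\<bar>}" for n
    have AM: "A n N \<in> sets M" for n N unfolding A_def by measurable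
    have kol: "measure M (A n N) \<le> tl n / \<epsilon>\<^sup>2" for n N
    proof -
      have "measure M (A n N) \<le> (\<Sum>j<N. \<integral>\<omega>. (\<zeta> (j + n) \<omega>)\<^sup>2 \<partial>M) / \<epsilon>\<^sup>2"
        unfolding A_def
      proof (rule kolmogorov0[where F = "\<lambda>j. F (j + n)", OF P])
        show "\<And>k. sigma_finite_subalgebra M (F (k + n))" using sub by simp
        show "\<And>k. sets (F (k + n)) \<subseteq> sets (F (Suc k + n))" using mono by simp
        show "\<And>k. \<zeta> (k + n) \<in> borel_measurable (F (Suc k + n))" using meas by simp
      qed (use sq ce e in auto)
      also have "(\<Sum>j<N. \<integral>\<omega>. (\<zeta> (j + n) \<omega>)\<^sup>2 \<partial>M) \<le> tl n"
        unfolding tl_def q_def[symmetric]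
        by (rule sum_le_suminf) (use smq q0 in auto)
      finally show ?thesis using e by (simp add: divide_right_mono)
    qed
    have lim: "(\<lambda>N. measure M (A n N)) \<longlonglongrightarrow> measure M (\<Union>N. A n N)" for n
    proof (rule finite_Lim_measure_incseq)
      show "range (A n) \<subseteq> sets M" using AM by auto
      show "incseq (A n)" by (rule incseq_SucI) (auto simp: A_def intro: le_SucI)
    qed
    have AE_eq: "(\<Union>N. A n N) = E n" for n by (auto simp: A_def E_def)
    have EB: "measure M (E n) \<le> tl n / \<epsilon>\<^sup>2" for n
    proof -
      have "measure M (\<Union>N. A n N) \<le> tl n / \<epsilon>\<^sup>2"
        by (rule LIMSEQ_le_const2[OF lim]) (use kol in auto)
      then show ?thesis by (simp add: AE_eq)
    qed
    define Bad where "Bad = {\<omega>\<in>space M. \<forall>n. \<exists>m. \<epsilon> \<le> \<bar>\<Sum>j<m. \<zeta> (j + n) \<omega>\<bar>}"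
    have BM: "Bad \<in> sets M" unfolding Bad_def by measurable
    have EM: "E n \<in> sets M" for n unfolding E_def by measurable
    have "measure M Bad \<le> tl n / \<epsilon>\<^sup>2" for n
    proof -
      have "Bad \<subseteq> E n" by (auto simp: Bad_def E_def)
      then have "measure M Bad \<le> measure M (E n)" using EM by (intro finite_measure_mono)
      with EB[of n] show ?thesis by linarith
    qed
    note bb = this
    have lim2: "(\<lambda>n. tl n / \<epsilon>\<^sup>2) \<longlonglongrightarrow> 0 / \<epsilon>\<^sup>2" by (intro tendsto_intros tl0) (use e in simp)
    have "measure M Bad \<le> 0 / \<epsilon>\<^sup>2"
      by (rule LIMSEQ_le_const[OF lim2]) (use bb in auto)
    then have "measure M Bad \<le> 0" by simp
    then have "emeasure M Bad = 0" using measure_nonneg[of M Bad] by (simp add: emeasure_eq_measure)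
    then have "Bad \<in> null_sets M" using BM by auto
    then show ?thesis by (rule AE_I') (auto simp: Bad_def not_less)
  qed
  have "AE \<omega> in M. \<forall>k::nat. \<exists>n. \<forall>m. \<bar>\<Sum>j<m. \<zeta> (j + n) \<omega>\<bar> < 1 / Suc k"
    by (rule AE_all_countable[THEN iffD2]) (auto intro!: good)
  then show ?thesis by eventually_elim (rule cauchy_tail)
qed

lemma meas_cont_comp:
  assumes c: "continuous_on S \<phi>" and f: "f \<in> borel_measurable N"
    and fS: "\<And>\<omega>. \<omega> \<in> space N \<Longrightarrow> f \<omega> \<in> S"
  shows "(\<lambda>\<omega>. \<phi> (f \<omega>)) \<in> borel_measurable N"
proof -
  have "f \<in> measurable N (restrict_space borel S)"
    by (rule measurable_restrict_space2) (use fS f in auto)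
  from measurable_comp[OF this borel_measurable_continuous_on_restrict[OF c]] show ?thesis
    by (simp add: comp_def)
qed

lemma joint_cont:
  fixes G :: "'a::euclidean_space \<Rightarrow> 'b::euclidean_space \<Rightarrow> 'c::real_normed_vector"
  assumes L1: "\<And>t y z. t \<in> T \<Longrightarrow> y \<in> Y \<Longrightarrow> z \<in> Y \<Longrightarrow> norm (G y t - G z t) \<le> A * norm (y - z)"
    and L2: "\<And>y t s. y \<in> Y \<Longrightarrow> t \<in> T \<Longrightarrow> s \<in> T \<Longrightarrow> norm (G y t - G y s) \<le> B * norm (t - s)"
  shows "continuous_on (Y \<times> T) (\<lambda>p. G (fst p) (snd p))"
proof (rule lipschitz_on_continuous_on)
  show "(\<bar>A\<bar> + \<bar>B\<bar>)-lipschitz_on (Y \<times> T) (\<lambda>p. G (fst p) (snd p))"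
  proof (rule lipschitz_onI)
    fix p p' assume p: "p \<in> Y \<times> T" and p': "p' \<in> Y \<times> T"
    have "norm (G (fst p) (snd p) - G (fst p') (snd p')) \<le>
        norm (G (fst p) (snd p) - G (fst p') (snd p)) + norm (G (fst p') (snd p) - G (fst p') (snd p'))"
      using norm_triangle_ineq[of "G (fst p) (snd p) - G (fst p') (snd p)" "G (fst p') (snd p) - G (fst p') (snd p')"]
      by simp
    also have "\<dots> \<le> A * norm (fst p - fst p') + B * norm (snd p - snd p')"
      using L1[of "snd p" "fst p" "fst p'"] L2[of "fst p'" "snd p" "snd p'"] p p'
      by (intro add_mono) (auto simp: mem_Times_iff)
    also have "\<dots> \<le> \<bar>A\<bar> * dist p p' + \<bar>B\<bar> * dist p p'"
    proof (intro add_mono)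
      have "norm (fst p - fst p') \<le> dist p p'" using dist_fst_le[of p p'] by (simp add: dist_norm)
      then show "A * norm (fst p - fst p') \<le> \<bar>A\<bar> * dist p p'"
        by (meson abs_ge_self abs_ge_zero mult_mono norm_ge_zero order_trans)
      have "norm (snd p - snd p') \<le> dist p p'" using dist_snd_le[of p p'] by (simp add: dist_norm)
      then show "B * norm (snd p - snd p') \<le> \<bar>B\<bar> * dist p p'"
        by (meson abs_ge_self abs_ge_zero mult_mono norm_ge_zero order_trans)
    qed
    finally show "dist (G (fst p) (snd p)) (G (fst p') (snd p')) \<le> (\<bar>A\<bar> + \<bar>B\<bar>) * dist p p'"
      by (simp add: dist_norm algebra_simps)
  qed simp
qed

lemma expand_sq:
  fixes a w :: "'a::real_inner"
  shows "(norm (a - g *\<^sub>R w))\<^sup>2 = (norm a)\<^sup>2 - 2 * g * (a \<bullet> w) + g\<^sup>2 * (norm w)\<^sup>2"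
  unfolding power2_norm_eq_inner
  by (simp add: inner_diff_left inner_diff_right inner_commute power2_eq_square algebra_simps)

lemma step_x:
  fixes e g1 g2 :: "'a::real_inner"
  assumes mono: "e \<bullet> g1 \<ge> mu * (norm e)\<^sup>2" and l1: "norm g1 \<le> A * norm e"
    and l2: "norm g2 \<le> B * nd" and g: "\<gamma> \<ge> 0" and mu: "mu > 0" and nd: "nd \<ge> 0"
  shows "(norm (e - \<gamma> *\<^sub>R (g1 + g2)))\<^sup>2 \<le> (1 - \<gamma> * mu + 2 * \<gamma>\<^sup>2 * A\<^sup>2) * (norm e)\<^sup>2
          + (\<gamma> * B\<^sup>2 / mu + 2 * \<gamma>\<^sup>2 * B\<^sup>2) * nd\<^sup>2"
proof -
  have ex: "(norm (e - \<gamma> *\<^sub>R (g1 + g2)))\<^sup>2 = (norm e)\<^sup>2 - 2 * \<gamma> * (e \<bullet> g1) - 2 * \<gamma> * (e \<bullet> g2) + \<gamma>\<^sup>2 * (norm (g1 + g2))\<^sup>2"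
    by (subst expand_sq) (simp add: inner_add_right algebra_simps)
  have t1: "- 2 * \<gamma> * (e \<bullet> g1) \<le> - 2 * \<gamma> * (mu * (norm e)\<^sup>2)"
    using mono g by (simp add: mult_left_mono)
  have "- (e \<bullet> g2) \<le> norm e * norm g2" using Cauchy_Schwarz_ineq2[of e g2] by (simp add: abs_le_iff)
  also have "\<dots> \<le> norm e * (B * nd)" using l2 by (simp add: mult_left_mono)
  also have "\<dots> \<le> (mu * (norm e)\<^sup>2 + (B * nd)\<^sup>2 / mu) / 2"
  proof -
    have "0 \<le> (mu * norm e - B * nd)\<^sup>2 / mu" using mu by simp
    also have "(mu * norm e - B * nd)\<^sup>2 / mu = mu * (norm e)\<^sup>2 + (B * nd)\<^sup>2 / mu - 2 * (norm e * (B * nd))"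
      using mu by (simp add: power2_diff field_simps power2_eq_square)
    finally show ?thesis by simp
  qed
  finally have "2 * \<gamma> * (- (e \<bullet> g2)) \<le> 2 * \<gamma> * ((mu * (norm e)\<^sup>2 + (B * nd)\<^sup>2 / mu) / 2)"
    by (rule mult_left_mono) (use g in auto)
  then have t2: "- 2 * \<gamma> * (e \<bullet> g2) \<le> \<gamma> * (mu * (norm e)\<^sup>2 + (B * nd)\<^sup>2 / mu)"
    by simp
  have "norm (g1 + g2) \<le> A * norm e + B * nd" using norm_triangle_ineq[of g1 g2] l1 l2 by simp
  then have "(norm (g1 + g2))\<^sup>2 \<le> (A * norm e + B * nd)\<^sup>2" by (simp add: power_mono)
  also have "\<dots> \<le> 2 * (A * norm e)\<^sup>2 + 2 * (B * nd)\<^sup>2"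
    by (smt (verit) power2_diff power2_sum zero_le_power2)
  finally have t3: "\<gamma>\<^sup>2 * (norm (g1 + g2))\<^sup>2 \<le> \<gamma>\<^sup>2 * (2 * (A * norm e)\<^sup>2 + 2 * (B * nd)\<^sup>2)"
    by (simp add: mult_left_mono)
  have "(norm (e - \<gamma> *\<^sub>R (g1 + g2)))\<^sup>2 \<le> (norm e)\<^sup>2 - 2 * \<gamma> * (mu * (norm e)\<^sup>2)
      + \<gamma> * (mu * (norm e)\<^sup>2 + (B * nd)\<^sup>2 / mu) + \<gamma>\<^sup>2 * (2 * (A * norm e)\<^sup>2 + 2 * (B * nd)\<^sup>2)"
    unfolding ex using t1 t2 t3 by linarith
  also have "\<dots> = (1 - \<gamma> * mu + 2 * \<gamma>\<^sup>2 * A\<^sup>2) * (norm e)\<^sup>2 + (\<gamma> * B\<^sup>2 / mu + 2 * \<gamma>\<^sup>2 * B\<^sup>2) * nd\<^sup>2"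
    by (simp add: power_mult_distrib algebra_simps add_divide_distrib)
  finally show ?thesis .
qed

lemma step_t:
  fixes d h :: "'a::real_inner"
  assumes mono: "d \<bullet> h \<ge> mu * (norm d)\<^sup>2" and l: "norm h \<le> C * norm d" and s: "s \<ge> 0"
  shows "(norm (d - s *\<^sub>R h))\<^sup>2 \<le> (1 - 2 * s * mu + s\<^sup>2 * C\<^sup>2) * (norm d)\<^sup>2"
proof -
  have "(norm (d - s *\<^sub>R h))\<^sup>2 = (norm d)\<^sup>2 - 2 * s * (d \<bullet> h) + s\<^sup>2 * (norm h)\<^sup>2"
    by (rule expand_sq)
  moreover have "- 2 * s * (d \<bullet> h) \<le> - 2 * s * (mu * (norm d)\<^sup>2)" using mono s by (simp add: mult_left_mono)
  moreover have "(norm h)\<^sup>2 \<le> (C * norm d)\<^sup>2" using l by (simp add: power_mono)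
  then have "s\<^sup>2 * (norm h)\<^sup>2 \<le> s\<^sup>2 * (C * norm d)\<^sup>2" by (simp add: mult_left_mono)
  ultimately show ?thesis by (simp add: power_mult_distrib algebra_simps)
qed

lemma cond_var_bound:
  fixes W :: "'w \<Rightarrow> 'a::euclidean_space" and h :: "'w \<Rightarrow> real"
  assumes sub: "sigma_finite_subalgebra M F" and Wm: "W \<in> borel_measurable M"
    and cv: "AE \<omega> in M. nn_cond_exp M F (\<lambda>\<omega>. ennreal ((norm (W \<omega>))\<^sup>2)) \<omega> \<le> ennreal c"
    and hF: "h \<in> borel_measurable F" and h0: "\<And>\<omega>. \<omega> \<in> space M \<Longrightarrow> h \<omega> \<ge> 0"
    and hi: "integrable M h" and c0: "c \<ge> 0"
  shows "integrable M (\<lambda>\<omega>. h \<omega> * (norm (W \<omega>))\<^sup>2)"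
    "(\<integral>\<omega>. h \<omega> * (norm (W \<omega>))\<^sup>2 \<partial>M) \<le> c * (\<integral>\<omega>. h \<omega> \<partial>M)"
proof -
  have hM[measurable]: "h \<in> borel_measurable M" by (rule sfs_meas[OF sub hF])
  have WM[measurable]: "W \<in> borel_measurable M" by fact
  have hF'[measurable]: "(\<lambda>\<omega>. ennreal (h \<omega>)) \<in> borel_measurable F" using hF by measurable
  have int0: "0 \<le> (\<integral>\<omega>. h \<omega> \<partial>M)" by (rule integral_nonneg_AE) (use h0 in auto)
  have "(\<integral>\<^sup>+\<omega>. ennreal (h \<omega> * (norm (W \<omega>))\<^sup>2) \<partial>M) = (\<integral>\<^sup>+\<omega>. ennreal (h \<omega>) * ennreal ((norm (W \<omega>))\<^sup>2) \<partial>M)"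
    by (rule nn_integral_cong) (use h0 in \<open>simp add: ennreal_mult\<close>)
  also have "\<dots> = (\<integral>\<^sup>+\<omega>. ennreal (h \<omega>) * nn_cond_exp M F (\<lambda>\<omega>. ennreal ((norm (W \<omega>))\<^sup>2)) \<omega> \<partial>M)"
    by (rule sigma_finite_subalgebra.nn_cond_exp_intg[OF sub, symmetric]) auto
  also have "\<dots> \<le> (\<integral>\<^sup>+\<omega>. ennreal (h \<omega>) * ennreal c \<partial>M)"
    by (rule nn_integral_mono_AE) (use cv in \<open>eventually_elim, auto intro: mult_left_mono\<close>)
  also have "\<dots> = ennreal c * (\<integral>\<^sup>+\<omega>. ennreal (h \<omega>) \<partial>M)"
    by (simp add: nn_integral_cmult mult.commute)
  also have "(\<integral>\<^sup>+\<omega>. ennreal (h \<omega>) \<partial>M) = ennreal (\<integral>\<omega>. h \<omega> \<partial>M)"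
    by (rule nn_integral_eq_integral[OF hi]) (use h0 in auto)
  also have "ennreal c * ennreal (\<integral>\<omega>. h \<omega> \<partial>M) = ennreal (c * (\<integral>\<omega>. h \<omega> \<partial>M))"
    using c0 int0 by (simp add: ennreal_mult)
  finally have le: "(\<integral>\<^sup>+\<omega>. ennreal (h \<omega> * (norm (W \<omega>))\<^sup>2) \<partial>M) \<le> ennreal (c * (\<integral>\<omega>. h \<omega> \<partial>M))" .
  show int: "integrable M (\<lambda>\<omega>. h \<omega> * (norm (W \<omega>))\<^sup>2)"
  proof (rule integrableI_nonneg)
    show "(\<lambda>\<omega>. h \<omega> * (norm (W \<omega>))\<^sup>2) \<in> borel_measurable M" by measurable
    show "AE \<omega> in M. 0 \<le> h \<omega> * (norm (W \<omega>))\<^sup>2" using h0 by auto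
    show "(\<integral>\<^sup>+\<omega>. ennreal (h \<omega> * (norm (W \<omega>))\<^sup>2) \<partial>M) < \<infinity>" using le
      using ennreal_less_top[of "c * (\<integral>\<omega>. h \<omega> \<partial>M)"] by (simp add: le_less_trans)
  qed
  have "(\<integral>\<^sup>+\<omega>. ennreal (h \<omega> * (norm (W \<omega>))\<^sup>2) \<partial>M) = ennreal (\<integral>\<omega>. h \<omega> * (norm (W \<omega>))\<^sup>2 \<partial>M)"
    by (rule nn_integral_eq_integral[OF int]) (use h0 in auto)
  with le show "(\<integral>\<omega>. h \<omega> * (norm (W \<omega>))\<^sup>2 \<partial>M) \<le> c * (\<integral>\<omega>. h \<omega> \<partial>M)"
    using c0 int0 by (simp add: ennreal_le_iff)
qed

lemma nf_props:
  fixes M :: "'w measure" and x0 :: "'w \<Rightarrow> 'a::topological_space" and t0 :: "'w \<Rightarrow> 'b::topological_space"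
  assumes P: "prob_space M" and x0: "x0 \<in> borel_measurable M" and t0: "t0 \<in> borel_measurable M"
    and wm: "\<And>k. w k \<in> borel_measurable M" and vm: "\<And>k. v k \<in> borel_measurable M"
  shows "sigma_finite_subalgebra M (noise_filtration M x0 t0 w v k)"
    and "sets (noise_filtration M x0 t0 w v k) \<subseteq> sets (noise_filtration M x0 t0 w v (Suc k))"
    and "x0 \<in> borel_measurable (noise_filtration M x0 t0 w v k)"
    and "t0 \<in> borel_measurable (noise_filtration M x0 t0 w v k)"
    and "l < k \<Longrightarrow> w l \<in> borel_measurable (noise_filtration M x0 t0 w v k)"
    and "l < k \<Longrightarrow> v l \<in> borel_measurable (noise_filtration M x0 t0 w v k)"
proof -
  let ?N = "\<lambda>k. noise_filtration M x0 t0 w v k"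
  define G where "G k \<equiv> {x0 -` A \<inter> space M | A. A \<in> sets borel} \<union> {t0 -` A \<inter> space M | A. A \<in> sets borel}
      \<union> (\<Union>l\<in>{..<k}. {w l -` A \<inter> space M | A. A \<in> sets borel} \<union> {v l -` A \<inter> space M | A. A \<in> sets borel})" for k
  have GP: "G j \<subseteq> Pow (space M)" for j unfolding G_def by auto
  have nb1: "space (?N j) = space M" for j
    unfolding noise_filtration_def G_def[symmetric] using GP by simp
  have nb2: "sets (?N j) = sigma_sets (space M) (G j)" for j
    unfolding noise_filtration_def G_def[symmetric] using GP by simp
  have nb3: "G j \<subseteq> sets M" for j unfolding G_def
    using measurable_sets[OF x0] measurable_sets[OF t0] measurable_sets[OF wm] measurable_sets[OF vm]
    by blast
  have nb4: "G j \<subseteq> G (Suc j)" for j unfolding G_def by (intro Un_mono UN_mono) auto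
  note nb = nb1 nb2 nb3 nb4
  have sub: "subalgebra M (?N k)"
    unfolding subalgebra_def using nb sets.sigma_sets_subset[of "G k" M] by simp
  interpret finite_measure M using P by (simp add: prob_space_def)
  have "finite_measure_subalgebra M (?N k)"
    by (simp add: finite_measure_subalgebra_def finite_measure_subalgebra_axioms_def sub finite_measure_axioms)
  then show "sigma_finite_subalgebra M (?N k)" by (rule finite_measure_subalgebra_is_sigma_finite)
  show "sets (?N k) \<subseteq> sets (?N (Suc k))" using nb by (simp add: sigma_sets_mono')
  have gen: "f \<in> borel_measurable (?N k)" if "\<And>A. A \<in> sets borel \<Longrightarrow> f -` A \<inter> space M \<in> G k" for f :: "'w \<Rightarrow> 'c::topological_space"
  proof (rule measurableI)
    fix A :: "'c set" assume "A \<in> sets borel"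
    then have "f -` A \<inter> space M \<in> G k" by (rule that)
    then show "f -` A \<inter> space (?N k) \<in> sets (?N k)" using nb by (auto intro: sigma_sets.Basic)
  qed simp
  show "x0 \<in> borel_measurable (?N k)" by (rule gen) (auto simp: G_def)
  show "t0 \<in> borel_measurable (?N k)" by (rule gen) (auto simp: G_def)
  show "w l \<in> borel_measurable (?N k)" if "l < k" by (rule gen) (use that in \<open>auto simp: G_def\<close>)
  show "v l \<in> borel_measurable (?N k)" if "l < k" by (rule gen) (use that in \<open>auto simp: G_def\<close>)
qed

lemma combine_ineq:
  fixes E D g q muA muB c K Lx Lt C aw bv W Vv nx nt :: real
  assumes E: "E \<ge> 0" and D: "D \<ge> 0" and g: "g \<ge> 0"
    and c1: "c \<le> muA" and c2: "c \<le> q * muB" and K1: "2 * Lx\<^sup>2 \<le> K" and K2: "2 * Lt\<^sup>2 + q\<^sup>2 * C\<^sup>2 \<le> K"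
    and nx: "nx \<le> (1 - g * muA + 2 * g\<^sup>2 * Lx\<^sup>2) * E + (g * (q * muB) + 2 * g\<^sup>2 * Lt\<^sup>2) * D - 2 * g * aw + g\<^sup>2 * W"
    and nt: "nt \<le> (1 - 2 * (q * g) * muB + (q * g)\<^sup>2 * C\<^sup>2) * D - 2 * (q * g) * bv + (q * g)\<^sup>2 * Vv"
  shows "nx + nt \<le> (E + D) - c * g * (E + D) + K * g\<^sup>2 * (E + D) + (- 2 * g * aw - 2 * (q * g) * bv) + (g\<^sup>2 * W + (q * g)\<^sup>2 * Vv)"
proof -
  have h1: "(muA - c) * g * E \<ge> 0" using c1 g E by simp
  have h2: "(q * muB - c) * g * D \<ge> 0" using c2 g D by simp
  have h3: "(K - 2 * Lx\<^sup>2) * g\<^sup>2 * E \<ge> 0" using K1 E by simp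
  have h4: "(K - 2 * Lt\<^sup>2 - q\<^sup>2 * C\<^sup>2) * g\<^sup>2 * D \<ge> 0" using K2 D by simp
  have id: "((E + D) - c * g * (E + D) + K * g\<^sup>2 * (E + D) + (- 2 * g * aw - 2 * (q * g) * bv) + (g\<^sup>2 * W + (q * g)\<^sup>2 * Vv))
    - (((1 - g * muA + 2 * g\<^sup>2 * Lx\<^sup>2) * E + (g * (q * muB) + 2 * g\<^sup>2 * Lt\<^sup>2) * D - 2 * g * aw + g\<^sup>2 * W)
       + ((1 - 2 * (q * g) * muB + (q * g)\<^sup>2 * C\<^sup>2) * D - 2 * (q * g) * bv + (q * g)\<^sup>2 * Vv))
    = (muA - c) * g * E + (q * muB - c) * g * D + (K - 2 * Lx\<^sup>2) * g\<^sup>2 * E + (K - 2 * Lt\<^sup>2 - q\<^sup>2 * C\<^sup>2) * g\<^sup>2 * D"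
    by (simp add: algebra_simps power2_eq_square)
  show ?thesis using id h1 h2 h3 h4 nx nt by linarith
qed

lemma sq3: "(u + v + w)\<^sup>2 \<le> 3 * (u\<^sup>2 + v\<^sup>2 + w\<^sup>2)" for u v w :: real
proof -
  have "0 \<le> (u - v)\<^sup>2 + (v - w)\<^sup>2 + (u - w)\<^sup>2" by simp
  moreover have "3 * (u\<^sup>2 + v\<^sup>2 + w\<^sup>2) - (u + v + w)\<^sup>2 = (u - v)\<^sup>2 + (v - w)\<^sup>2 + (u - w)\<^sup>2"
    by (simp add: power2_eq_square algebra_simps)
  ultimately show ?thesis by linarith
qed

lemma sq2: "(u + v)\<^sup>2 \<le> 2 * (u\<^sup>2 + v\<^sup>2)" for u v :: real
proof -
  have "0 \<le> (u - v)\<^sup>2" by simp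
  moreover have "2 * (u\<^sup>2 + v\<^sup>2) - (u + v)\<^sup>2 = (u - v)\<^sup>2" by (simp add: power2_eq_square algebra_simps)
  ultimately show ?thesis by linarith
qed

lemma abound_gen:
  fixes e g1 g2 :: "'a::real_normed_vector"
  assumes l1: "norm g1 \<le> A * norm e" and l2: "norm g2 \<le> B * nd" and g: "\<gamma> \<ge> 0" and nd: "nd \<ge> 0"
    and G: "\<gamma>\<^sup>2 \<le> \<Gamma>"
  shows "(norm (e - \<gamma> *\<^sub>R (g1 + g2)))\<^sup>2 \<le> (3 + 3 * \<Gamma> * (A\<^sup>2 + B\<^sup>2)) * ((norm e)\<^sup>2 + nd\<^sup>2)"
proof -
  have "norm (e - \<gamma> *\<^sub>R (g1 + g2)) \<le> norm e + \<gamma> * norm g1 + \<gamma> * norm g2"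
  proof -
    have "norm (e - \<gamma> *\<^sub>R (g1 + g2)) \<le> norm e + norm (\<gamma> *\<^sub>R (g1 + g2))" by (rule norm_triangle_ineq4)
    also have "norm (\<gamma> *\<^sub>R (g1 + g2)) = \<gamma> * norm (g1 + g2)" using g by simp
    also have "\<gamma> * norm (g1 + g2) \<le> \<gamma> * (norm g1 + norm g2)"
      using g norm_triangle_ineq[of g1 g2] by (rule mult_left_mono[rotated])
    finally show ?thesis by (simp add: algebra_simps)
  qed
  also have "\<dots> \<le> norm e + \<gamma> * (A * norm e) + \<gamma> * (B * nd)"
    using l1 l2 g by (intro add_mono mult_left_mono) auto
  finally have n: "norm (e - \<gamma> *\<^sub>R (g1 + g2)) \<le> norm e + \<gamma> * (A * norm e) + \<gamma> * (B * nd)" .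
  have "(norm (e - \<gamma> *\<^sub>R (g1 + g2)))\<^sup>2 \<le> (norm e + \<gamma> * (A * norm e) + \<gamma> * (B * nd))\<^sup>2"
    by (rule power_mono[OF n norm_ge_zero])
  also have "\<dots> \<le> 3 * ((norm e)\<^sup>2 + (\<gamma> * (A * norm e))\<^sup>2 + (\<gamma> * (B * nd))\<^sup>2)" by (rule sq3)
  also have "\<dots> = 3 * ((norm e)\<^sup>2 + \<gamma>\<^sup>2 * (A\<^sup>2 * (norm e)\<^sup>2) + \<gamma>\<^sup>2 * (B\<^sup>2 * nd\<^sup>2))"
    by (simp add: power_mult_distrib)
  also have "\<dots> \<le> 3 * ((norm e)\<^sup>2 + \<Gamma> * (A\<^sup>2 * (norm e)\<^sup>2) + \<Gamma> * (B\<^sup>2 * nd\<^sup>2))"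
    using G by (intro mult_left_mono add_mono mult_right_mono) auto
  also have "\<dots> \<le> (3 + 3 * \<Gamma> * (A\<^sup>2 + B\<^sup>2)) * ((norm e)\<^sup>2 + nd\<^sup>2)"
  proof -
    have G0: "\<Gamma> \<ge> 0" using G by (meson order_trans zero_le_power2)
    have "\<Gamma> * (A\<^sup>2 * (norm e)\<^sup>2) \<le> \<Gamma> * (A\<^sup>2 * (norm e)\<^sup>2) + \<Gamma> * (B\<^sup>2 * (norm e)\<^sup>2) + \<Gamma> * (A\<^sup>2 * nd\<^sup>2)"
      using G0 by simp
    moreover have "(3 + 3 * \<Gamma> * (A\<^sup>2 + B\<^sup>2)) * ((norm e)\<^sup>2 + nd\<^sup>2) = 3 * (norm e)\<^sup>2 + 3 * nd\<^sup>2 +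
       3 * (\<Gamma> * (A\<^sup>2 * (norm e)\<^sup>2) + \<Gamma> * (B\<^sup>2 * (norm e)\<^sup>2) + \<Gamma> * (A\<^sup>2 * nd\<^sup>2) + \<Gamma> * (B\<^sup>2 * nd\<^sup>2))"
      by (simp add: algebra_simps)
    moreover have "0 \<le> nd\<^sup>2" by simp
    ultimately show ?thesis by simp
  qed
  finally show ?thesis .
qed

lemma bbound_gen:
  fixes d h :: "'a::real_normed_vector"
  assumes l: "norm h \<le> C * norm d" and s: "s \<ge> 0" and S: "s\<^sup>2 \<le> S"
  shows "(norm (d - s *\<^sub>R h))\<^sup>2 \<le> (2 + 2 * S * C\<^sup>2) * (norm d)\<^sup>2"
proof -
  have "norm (d - s *\<^sub>R h) \<le> norm d + s * (C * norm d)"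
    using norm_triangle_ineq4[of d "s *\<^sub>R h"] l s by (simp add: mult_left_mono order_trans)
  then have "(norm (d - s *\<^sub>R h))\<^sup>2 \<le> (norm d + s * (C * norm d))\<^sup>2" by (rule power_mono) simp
  also have "\<dots> \<le> 2 * ((norm d)\<^sup>2 + (s * (C * norm d))\<^sup>2)" by (rule sq2)
  also have "\<dots> = 2 * ((norm d)\<^sup>2 + s\<^sup>2 * (C\<^sup>2 * (norm d)\<^sup>2))" by (simp add: power_mult_distrib)
  also have "\<dots> \<le> 2 * ((norm d)\<^sup>2 + S * (C\<^sup>2 * (norm d)\<^sup>2))"
    using S by (intro mult_left_mono add_mono mult_right_mono) auto
  also have "\<dots> = (2 + 2 * S * C\<^sup>2) * (norm d)\<^sup>2" by (simp add: algebra_simps)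
  finally show ?thesis .
qed


lemma int_dom:
  fixes f H :: "'w \<Rightarrow> real"
  assumes H: "integrable M H" and f: "f \<in> borel_measurable M"
    and f0: "\<And>\<omega>. \<omega> \<in> space M \<Longrightarrow> 0 \<le> f \<omega>" and fH: "\<And>\<omega>. \<omega> \<in> space M \<Longrightarrow> f \<omega> \<le> H \<omega>"
  shows "integrable M f" "(\<integral>\<omega>. f \<omega> \<partial>M) \<le> (\<integral>\<omega>. H \<omega> \<partial>M)"
proof -
  show i: "integrable M f"
  proof (rule Bochner_Integration.integrable_bound[OF H f])
    show "AE \<omega> in M. norm (f \<omega>) \<le> norm (H \<omega>)"
    proof (rule AE_I2)
      fix \<omega> assume "\<omega> \<in> space M"
      then show "norm (f \<omega>) \<le> norm (H \<omega>)" using f0 fH by fastforce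
    qed
  qed
  show "(\<integral>\<omega>. f \<omega> \<partial>M) \<le> (\<integral>\<omega>. H \<omega> \<partial>M)" by (rule integral_mono[OF i H fH])
qed

theorem proposition2p5:
  fixes M :: "'w measure"
    and X :: "'a::euclidean_space set" and \<Theta> :: "'b::euclidean_space set"
    and f :: "'a \<Rightarrow> 'b \<Rightarrow> real" and g :: "'b \<Rightarrow> real"
    and gradx :: "'a \<Rightarrow> 'b \<Rightarrow> 'a" and gradg :: "'b \<Rightarrow> 'b"
    and sgx :: "'a \<Rightarrow> 'b \<Rightarrow> 'sx \<Rightarrow> 'a" and sgg :: "'b \<Rightarrow> 'sy \<Rightarrow> 'b"
    and \<xi> :: "nat \<Rightarrow> 'w \<Rightarrow> 'sx" and \<eta> :: "nat \<Rightarrow> 'w \<Rightarrow> 'sy"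
    and x :: "nat \<Rightarrow> 'w \<Rightarrow> 'a" and \<theta> :: "nat \<Rightarrow> 'w \<Rightarrow> 'b"
    and w :: "nat \<Rightarrow> 'w \<Rightarrow> 'a" and v :: "nat \<Rightarrow> 'w \<Rightarrow> 'b"
    and \<gamma>x \<gamma>\<theta> :: "nat \<Rightarrow> real"
    and \<mu>x \<mu>\<theta> Lx L\<theta> C\<theta> \<nu>x \<nu>\<theta> :: real
  assumes M: "prob_space M"
    and X: "X \<noteq> {}" "closed X" "convex X"
    and \<Theta>: "\<Theta> \<noteq> {}" "closed \<Theta>" "convex \<Theta>"
    \<comment> \<open>(A1-1)(i)\<close>
    and \<mu>x: "\<mu>x > 0"
    and f_sc: "\<And>t. t \<in> \<Theta> \<Longrightarrow> strongly_convex_on X (\<lambda>y. f y t) \<mu>x"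
    and f_deriv: "\<And>t y. t \<in> \<Theta> \<Longrightarrow> y \<in> X \<Longrightarrow>
        ((\<lambda>z. f z t) has_derivative (\<lambda>h. gradx y t \<bullet> h)) (at y)"
    and f_cont: "\<And>t. t \<in> \<Theta> \<Longrightarrow> continuous_on X (\<lambda>y. gradx y t)"
    and f_Lx: "\<And>t y z. t \<in> \<Theta> \<Longrightarrow> y \<in> X \<Longrightarrow> z \<in> X \<Longrightarrow>
        norm (gradx y t - gradx z t) \<le> Lx * norm (y - z)"
    \<comment> \<open>(A1-1)(ii)\<close>
    and f_Lt: "\<And>y t s. y \<in> X \<Longrightarrow> t \<in> \<Theta> \<Longrightarrow> s \<in> \<Theta> \<Longrightarrow>
        norm (gradx y t - gradx y s) \<le> L\<theta> * norm (t - s)"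
    \<comment> \<open>(A1-1)(iii)\<close>
    and \<mu>\<theta>: "\<mu>\<theta> > 0"
    and g_sc: "strongly_convex_on \<Theta> g \<mu>\<theta>"
    and g_deriv: "\<And>t. t \<in> \<Theta> \<Longrightarrow> (g has_derivative (\<lambda>h. gradg t \<bullet> h)) (at t)"
    and g_cont: "continuous_on \<Theta> gradg"
    and g_C: "\<And>t s. t \<in> \<Theta> \<Longrightarrow> s \<in> \<Theta> \<Longrightarrow> norm (gradg t - gradg s) \<le> C\<theta> * norm (t - s)"
    \<comment> \<open>positive steplengths and (A2-1)\<close>
    and \<gamma>x_pos: "\<And>k. \<gamma>x k > 0" and \<gamma>\<theta>_pos: "\<And>k. \<gamma>\<theta> k > 0"
    and \<gamma>x_sum: "\<not> summable \<gamma>x"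
    and \<gamma>x_sq: "summable (\<lambda>k. (\<gamma>x k)\<^sup>2)"
    and \<gamma>\<theta>_def: "\<And>k. \<gamma>\<theta> k = \<gamma>x k * L\<theta>\<^sup>2 / (\<mu>x * \<mu>\<theta>)"
    \<comment> \<open>the scheme: initial points, samples, noise, recursion\<close>
    and x0: "x 0 \<in> borel_measurable M" "\<And>\<omega>. \<omega> \<in> space M \<Longrightarrow> x 0 \<omega> \<in> X"
    and \<theta>0: "\<theta> 0 \<in> borel_measurable M" "\<And>\<omega>. \<omega> \<in> space M \<Longrightarrow> \<theta> 0 \<omega> \<in> \<Theta>"
    and w_def: "\<And>k \<omega>. w k \<omega> = sgx (x k \<omega>) (\<theta> k \<omega>) (\<xi> k \<omega>) - gradx (x k \<omega>) (\<theta> k \<omega>)"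
    and v_def: "\<And>k \<omega>. v k \<omega> = sgg (\<theta> k \<omega>) (\<eta> k \<omega>) - gradg (\<theta> k \<omega>)"
    and w_meas: "\<And>k. w k \<in> borel_measurable M"
    and v_meas: "\<And>k. v k \<in> borel_measurable M"
    and x_rec: "\<And>k \<omega>. x (Suc k) \<omega> = closest_point X (x k \<omega> - \<gamma>x k *\<^sub>R (gradx (x k \<omega>) (\<theta> k \<omega>) + w k \<omega>))"
    and \<theta>_rec: "\<And>k \<omega>. \<theta> (Suc k) \<omega> = closest_point \<Theta> (\<theta> k \<omega> - \<gamma>\<theta> k *\<^sub>R (gradg (\<theta> k \<omega>) + v k \<omega>))"
    \<comment> \<open>(A3), with F k the sigma-field generated by x 0, theta 0, w l, v l (l < k)\<close>
    and w_mean: "\<And>k b. b \<in> Basis \<Longrightarrow> AE \<omega> in M.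
        real_cond_exp M (noise_filtration M (x 0) (\<theta> 0) w v k) (\<lambda>\<omega>. w k \<omega> \<bullet> b) \<omega> = 0"
    and v_mean: "\<And>k b. b \<in> Basis \<Longrightarrow> AE \<omega> in M.
        real_cond_exp M (noise_filtration M (x 0) (\<theta> 0) w v k) (\<lambda>\<omega>. v k \<omega> \<bullet> b) \<omega> = 0"
    and w_var: "\<And>k. AE \<omega> in M.
        nn_cond_exp M (noise_filtration M (x 0) (\<theta> 0) w v k) (\<lambda>\<omega>. ennreal ((norm (w k \<omega>))\<^sup>2)) \<omega> \<le> ennreal (\<nu>x\<^sup>2)"
    and v_var: "\<And>k. AE \<omega> in M.
        nn_cond_exp M (noise_filtration M (x 0) (\<theta> 0) w v k) (\<lambda>\<omega>. ennreal ((norm (v k \<omega>))\<^sup>2)) \<omega> \<le> ennreal (\<nu>\<theta>\<^sup>2)"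
  shows "\<exists>\<theta>s xs. \<theta>s \<in> \<Theta> \<and> (\<forall>t\<in>\<Theta>. g \<theta>s \<le> g t) \<and> (\<forall>t\<in>\<Theta>. (\<forall>s\<in>\<Theta>. g t \<le> g s) \<longrightarrow> t = \<theta>s)
     \<and> xs \<in> X \<and> (\<forall>y\<in>X. f xs \<theta>s \<le> f y \<theta>s) \<and> (\<forall>y\<in>X. (\<forall>z\<in>X. f y \<theta>s \<le> f z \<theta>s) \<longrightarrow> y = xs)
     \<and> (AE \<omega> in M. (\<lambda>k. x k \<omega>) \<longlonglongrightarrow> xs \<and> (\<lambda>k. \<theta> k \<omega>) \<longlonglongrightarrow> \<theta>s)"
proof -
  interpret prob_space M by (rule M)
  define q where "q = L\<theta>\<^sup>2 / (\<mu>x * \<mu>\<theta>)"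
  have \<gamma>\<theta>q: "\<gamma>\<theta> k = q * \<gamma>x k" for k by (simp add: \<gamma>\<theta>_def q_def)
  have q0: "q > 0"
  proof -
    have "q * \<gamma>x 0 > 0" using \<gamma>\<theta>_pos[of 0] by (simp add: \<gamma>\<theta>q)
    then show ?thesis using \<gamma>x_pos[of 0] by (simp add: zero_less_mult_iff)
  qed
  have L\<theta>2: "L\<theta>\<^sup>2 = q * \<mu>x * \<mu>\<theta>" using \<mu>x \<mu>\<theta> by (simp add: q_def)
  have L\<theta>pos: "L\<theta>\<^sup>2 > 0" using L\<theta>2 q0 \<mu>x \<mu>\<theta> by simp
  obtain \<theta>s where \<theta>sT: "\<theta>s \<in> \<Theta>" and \<theta>smin: "\<forall>t\<in>\<Theta>. g \<theta>s \<le> g t"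
    and \<theta>sun: "\<forall>t\<in>\<Theta>. (\<forall>s\<in>\<Theta>. g t \<le> g s) \<longrightarrow> t = \<theta>s" and \<theta>sVI: "\<forall>t\<in>\<Theta>. gradg \<theta>s \<bullet> (t - \<theta>s) \<ge> 0"
    using sc_min_exists[OF \<Theta>(2) \<Theta>(3) \<Theta>(1) g_sc \<mu>\<theta> g_deriv] by blast
  obtain xs where xsX: "xs \<in> X" and xsmin: "\<forall>y\<in>X. f xs \<theta>s \<le> f y \<theta>s"
    and xsun: "\<forall>y\<in>X. (\<forall>z\<in>X. f y \<theta>s \<le> f z \<theta>s) \<longrightarrow> y = xs" and xsVI: "\<forall>y\<in>X. gradx xs \<theta>s \<bullet> (y - xs) \<ge> 0"
    using sc_min_exists[OF X(2) X(3) X(1) f_sc[OF \<theta>sT] \<mu>x, of "\<lambda>y. gradx y \<theta>s"] f_deriv[OF \<theta>sT] by blast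
  have xfix: "closest_point X (xs - \<gamma> *\<^sub>R gradx xs \<theta>s) = xs" if "\<gamma> \<ge> 0" for \<gamma>
    by (rule proj_fix[OF X(3) X(2) xsX xsVI that])
  have \<theta>fix: "closest_point \<Theta> (\<theta>s - \<gamma> *\<^sub>R gradg \<theta>s) = \<theta>s" if "\<gamma> \<ge> 0" for \<gamma>
    by (rule proj_fix[OF \<Theta>(3) \<Theta>(2) \<theta>sT \<theta>sVI that])
  have fmono: "(gradx y t - gradx z t) \<bullet> (y - z) \<ge> \<mu>x * (norm (y - z))\<^sup>2" if "t \<in> \<Theta>" "y \<in> X" "z \<in> X" for t y z
    using sc_monotone[OF f_sc[OF that(1)] f_deriv[OF that(1) that(2)] f_deriv[OF that(1) that(3)] that(2,3)] .
  have gmono: "(gradg s - gradg t) \<bullet> (s - t) \<ge> \<mu>\<theta> * (norm (s - t))\<^sup>2" if "s \<in> \<Theta>" "t \<in> \<Theta>" for s t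
    using sc_monotone[OF g_sc g_deriv[OF that(1)] g_deriv[OF that(2)] that] .
  have xX: "x k \<omega> \<in> X" if "\<omega> \<in> space M" for k \<omega>
  proof (cases k)
    case 0 then show ?thesis using x0(2)[OF that] by simp
  next
    case (Suc j) then show ?thesis using closest_point_in_set[OF X(2) X(1)] by (simp add: x_rec)
  qed
  have \<theta>T: "\<theta> k \<omega> \<in> \<Theta>" if "\<omega> \<in> space M" for k \<omega>
  proof (cases k)
    case 0 then show ?thesis using \<theta>0(2)[OF that] by simp
  next
    case (Suc j) then show ?thesis using closest_point_in_set[OF \<Theta>(2) \<Theta>(1)] by (simp add: \<theta>_rec)
  qed
  define V where "V k \<omega> = (norm (x k \<omega> - xs))\<^sup>2 + (norm (\<theta> k \<omega> - \<theta>s))\<^sup>2" for k \<omega>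
  define a where "a k \<omega> = (x k \<omega> - xs) - \<gamma>x k *\<^sub>R (gradx (x k \<omega>) (\<theta> k \<omega>) - gradx xs \<theta>s)" for k \<omega>
  define b where "b k \<omega> = (\<theta> k \<omega> - \<theta>s) - \<gamma>\<theta> k *\<^sub>R (gradg (\<theta> k \<omega>) - gradg \<theta>s)" for k \<omega>
  define \<xi> where "\<xi> k \<omega> = - 2 * \<gamma>x k * (a k \<omega> \<bullet> w k \<omega>) - 2 * \<gamma>\<theta> k * (b k \<omega> \<bullet> v k \<omega>)" for k \<omega>
  define \<beta> where "\<beta> k \<omega> = (\<gamma>x k)\<^sup>2 * (norm (w k \<omega>))\<^sup>2 + (\<gamma>\<theta> k)\<^sup>2 * (norm (v k \<omega>))\<^sup>2" for k \<omega>
  define c where "c = min \<mu>x (L\<theta>\<^sup>2 / \<mu>x)"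
  define K where "K = 2 * Lx\<^sup>2 + 2 * L\<theta>\<^sup>2 + q\<^sup>2 * C\<theta>\<^sup>2"
  have c0: "c > 0" using \<mu>x L\<theta>pos by (simp add: c_def)
  have K0: "K \<ge> 0" by (simp add: K_def)
  have V0: "V k \<omega> \<ge> 0" for k \<omega> by (simp add: V_def)
  have path: "V (Suc k) \<omega> \<le> V k \<omega> - c * \<gamma>x k * V k \<omega> + K * (\<gamma>x k)\<^sup>2 * V k \<omega> + \<xi> k \<omega> + \<beta> k \<omega>"
    if \<omega>: "\<omega> \<in> space M" for k \<omega>
  proof -
    let ?g = "\<gamma>x k" and ?gt = "\<gamma>\<theta> k" and ?X = "x k \<omega>" and ?T = "\<theta> k \<omega>"
    have XX: "?X \<in> X" using xX[OF \<omega>] .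
    have TT: "?T \<in> \<Theta>" using \<theta>T[OF \<omega>] .
    have g0: "?g \<ge> 0" using \<gamma>x_pos[of k] by simp
    have gt0: "?gt \<ge> 0" using \<gamma>\<theta>_pos[of k] by simp
    define e where "e = ?X - xs"
    define d where "d = ?T - \<theta>s"
    define g1 where "g1 = gradx ?X ?T - gradx xs ?T"
    define g2 where "g2 = gradx xs ?T - gradx xs \<theta>s"
    define h1 where "h1 = gradg ?T - gradg \<theta>s"
    have aeq: "a k \<omega> = e - ?g *\<^sub>R (g1 + g2)" by (simp add: a_def e_def g1_def g2_def)
    have beq: "b k \<omega> = d - ?gt *\<^sub>R h1" by (simp add: b_def d_def h1_def)
    have hx: "norm (x (Suc k) \<omega> - xs) \<le> norm (a k \<omega> - ?g *\<^sub>R w k \<omega>)"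
    proof -
      have "dist (closest_point X (?X - ?g *\<^sub>R (gradx ?X ?T + w k \<omega>))) (closest_point X (xs - ?g *\<^sub>R gradx xs \<theta>s))
          \<le> dist (?X - ?g *\<^sub>R (gradx ?X ?T + w k \<omega>)) (xs - ?g *\<^sub>R gradx xs \<theta>s)"
        by (rule closest_point_lipschitz[OF X(3) X(2) X(1)])
      moreover have "(?X - ?g *\<^sub>R (gradx ?X ?T + w k \<omega>)) - (xs - ?g *\<^sub>R gradx xs \<theta>s) = a k \<omega> - ?g *\<^sub>R w k \<omega>"
        by (simp add: a_def algebra_simps)
      ultimately show ?thesis using xfix[OF g0] by (simp add: x_rec dist_norm)
    qed
    have ht: "norm (\<theta> (Suc k) \<omega> - \<theta>s) \<le> norm (b k \<omega> - ?gt *\<^sub>R v k \<omega>)"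
    proof -
      have "dist (closest_point \<Theta> (?T - ?gt *\<^sub>R (gradg ?T + v k \<omega>))) (closest_point \<Theta> (\<theta>s - ?gt *\<^sub>R gradg \<theta>s))
          \<le> dist (?T - ?gt *\<^sub>R (gradg ?T + v k \<omega>)) (\<theta>s - ?gt *\<^sub>R gradg \<theta>s)"
        by (rule closest_point_lipschitz[OF \<Theta>(3) \<Theta>(2) \<Theta>(1)])
      moreover have "(?T - ?gt *\<^sub>R (gradg ?T + v k \<omega>)) - (\<theta>s - ?gt *\<^sub>R gradg \<theta>s) = b k \<omega> - ?gt *\<^sub>R v k \<omega>"
        by (simp add: b_def algebra_simps)
      ultimately show ?thesis using \<theta>fix[OF gt0] by (simp add: \<theta>_rec dist_norm)
    qed
    have nx0: "(norm (x (Suc k) \<omega> - xs))\<^sup>2 \<le> (norm (a k \<omega>))\<^sup>2 - 2 * ?g * (a k \<omega> \<bullet> w k \<omega>) + ?g\<^sup>2 * (norm (w k \<omega>))\<^sup>2"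
      using power_mono[OF hx norm_ge_zero, of 2] expand_sq[of "a k \<omega>" ?g "w k \<omega>"] by simp
    have nt0: "(norm (\<theta> (Suc k) \<omega> - \<theta>s))\<^sup>2 \<le> (norm (b k \<omega>))\<^sup>2 - 2 * ?gt * (b k \<omega> \<bullet> v k \<omega>) + ?gt\<^sup>2 * (norm (v k \<omega>))\<^sup>2"
      using power_mono[OF ht norm_ge_zero, of 2] expand_sq[of "b k \<omega>" ?gt "v k \<omega>"] by simp
    have sa: "(norm (a k \<omega>))\<^sup>2 \<le> (1 - ?g * \<mu>x + 2 * ?g\<^sup>2 * Lx\<^sup>2) * (norm e)\<^sup>2 + (?g * L\<theta>\<^sup>2 / \<mu>x + 2 * ?g\<^sup>2 * L\<theta>\<^sup>2) * (norm d)\<^sup>2"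
      unfolding aeq
    proof (rule step_x[OF _ _ _ g0 \<mu>x norm_ge_zero])
      show "\<mu>x * (norm e)\<^sup>2 \<le> e \<bullet> g1" using fmono[OF TT XX xsX] by (simp add: e_def g1_def inner_commute)
      show "norm g1 \<le> Lx * norm e" using f_Lx[OF TT XX xsX] by (simp add: e_def g1_def)
      show "norm g2 \<le> L\<theta> * norm d" using f_Lt[OF xsX TT \<theta>sT] by (simp add: d_def g2_def)
    qed
    have sb: "(norm (b k \<omega>))\<^sup>2 \<le> (1 - 2 * ?gt * \<mu>\<theta> + ?gt\<^sup>2 * C\<theta>\<^sup>2) * (norm d)\<^sup>2"
      unfolding beq
    proof (rule step_t[OF _ _ gt0])
      show "\<mu>\<theta> * (norm d)\<^sup>2 \<le> d \<bullet> h1" using gmono[OF TT \<theta>sT] by (simp add: d_def h1_def inner_commute)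
      show "norm h1 \<le> C\<theta> * norm d" using g_C[OF TT \<theta>sT] by (simp add: d_def h1_def)
    qed
    have r: "L\<theta>\<^sup>2 / \<mu>x = q * \<mu>\<theta>" using L\<theta>2 \<mu>x by simp
    have "(norm (x (Suc k) \<omega> - xs))\<^sup>2 + (norm (\<theta> (Suc k) \<omega> - \<theta>s))\<^sup>2 \<le>
        ((norm e)\<^sup>2 + (norm d)\<^sup>2) - c * ?g * ((norm e)\<^sup>2 + (norm d)\<^sup>2) + K * ?g\<^sup>2 * ((norm e)\<^sup>2 + (norm d)\<^sup>2)
        + (- 2 * ?g * (a k \<omega> \<bullet> w k \<omega>) - 2 * (q * ?g) * (b k \<omega> \<bullet> v k \<omega>))
        + (?g\<^sup>2 * (norm (w k \<omega>))\<^sup>2 + (q * ?g)\<^sup>2 * (norm (v k \<omega>))\<^sup>2)"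
    proof (rule combine_ineq[where muA = \<mu>x and muB = \<mu>\<theta> and Lx = Lx and Lt = L\<theta> and C = C\<theta>])
      show "c \<le> \<mu>x" by (simp add: c_def)
      show "c \<le> q * \<mu>\<theta>" by (simp add: c_def r)
      show "2 * Lx\<^sup>2 \<le> K" by (simp add: K_def)
      show "2 * L\<theta>\<^sup>2 + q\<^sup>2 * C\<theta>\<^sup>2 \<le> K" by (simp add: K_def)
      show "(norm (x (Suc k) \<omega> - xs))\<^sup>2 \<le> (1 - ?g * \<mu>x + 2 * ?g\<^sup>2 * Lx\<^sup>2) * (norm e)\<^sup>2
          + (?g * (q * \<mu>\<theta>) + 2 * ?g\<^sup>2 * L\<theta>\<^sup>2) * (norm d)\<^sup>2 - 2 * ?g * (a k \<omega> \<bullet> w k \<omega>) + ?g\<^sup>2 * (norm (w k \<omega>))\<^sup>2"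
        using nx0 sa r by (simp add: times_divide_eq_right[symmetric])
      show "(norm (\<theta> (Suc k) \<omega> - \<theta>s))\<^sup>2 \<le> (1 - 2 * (q * ?g) * \<mu>\<theta> + (q * ?g)\<^sup>2 * C\<theta>\<^sup>2) * (norm d)\<^sup>2
          - 2 * (q * ?g) * (b k \<omega> \<bullet> v k \<omega>) + (q * ?g)\<^sup>2 * (norm (v k \<omega>))\<^sup>2"
        using nt0 sb by (simp add: \<gamma>\<theta>q)
    qed (use g0 in auto)
    then show ?thesis by (simp add: V_def e_def d_def \<xi>_def \<beta>_def \<gamma>\<theta>q)
  qed
  define F where "F k = noise_filtration M (x 0) (\<theta> 0) w v k" for k
  note nfp = nf_props[OF M x0(1) \<theta>0(1) w_meas v_meas]
  have sub: "sigma_finite_subalgebra M (F k)" for k unfolding F_def by (rule nfp(1))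
  have mono: "sets (F k) \<subseteq> sets (F (Suc k))" for k unfolding F_def by (rule nfp(2))
  have mle: "\<And>j k f. j \<le> k \<Longrightarrow> f \<in> borel_measurable (F j) \<Longrightarrow> f \<in> borel_measurable (F k)"
    using filt_meas_mono[where M=M and F=F, OF sub mono] by blast
  have toM: "\<And>k f. f \<in> borel_measurable (F k) \<Longrightarrow> f \<in> borel_measurable M"
    using sfs_meas[OF sub] by blast
  have spF: "space (F k) = space M" for k using sfs_space[OF sub] .
  have wF: "w k \<in> borel_measurable (F (Suc k))" for k unfolding F_def by (rule nfp(5)) simp
  have vF: "v k \<in> borel_measurable (F (Suc k))" for k unfolding F_def by (rule nfp(6)) simp
  have gcont: "continuous_on (X \<times> \<Theta>) (\<lambda>p. gradx (fst p) (snd p))" by (rule joint_cont[OF f_Lx f_Lt])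
  have cpX: "continuous_on UNIV (closest_point X)" by (rule continuous_on_closest_point[OF X(3) X(2) X(1)])
  have cpT: "continuous_on UNIV (closest_point \<Theta>)" by (rule continuous_on_closest_point[OF \<Theta>(3) \<Theta>(2) \<Theta>(1)])
  have gradxF: "(\<lambda>\<omega>. gradx (x k \<omega>) (\<theta> k \<omega>)) \<in> borel_measurable N"
    if "x k \<in> borel_measurable N" "\<theta> k \<in> borel_measurable N" "space N = space M" for k N
  proof -
    have "(\<lambda>\<omega>. (\<lambda>p. gradx (fst p) (snd p)) (x k \<omega>, \<theta> k \<omega>)) \<in> borel_measurable N"
      by (rule meas_cont_comp[OF gcont]) (use that xX \<theta>T in \<open>auto intro: borel_measurable_Pair\<close>)
    then show ?thesis by simp
  qed
  have gradgF: "(\<lambda>\<omega>. gradg (\<theta> k \<omega>)) \<in> borel_measurable N"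
    if "\<theta> k \<in> borel_measurable N" "space N = space M" for k N
    by (rule meas_cont_comp[OF g_cont]) (use that \<theta>T in auto)
  have xtF: "x k \<in> borel_measurable (F k) \<and> \<theta> k \<in> borel_measurable (F k)" for k
  proof (induction k)
    case 0 show ?case unfolding F_def using nfp(3,4) by simp
  next
    case (Suc k)
    have [measurable]: "x k \<in> borel_measurable (F (Suc k))" "\<theta> k \<in> borel_measurable (F (Suc k))"
      using Suc mle[of k "Suc k"] by auto
    have [measurable]: "(\<lambda>\<omega>. gradx (x k \<omega>) (\<theta> k \<omega>)) \<in> borel_measurable (F (Suc k))"
      by (rule gradxF) (auto simp: spF)
    have [measurable]: "(\<lambda>\<omega>. gradg (\<theta> k \<omega>)) \<in> borel_measurable (F (Suc k))"
      by (rule gradgF) (auto simp: spF)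
    have [measurable]: "w k \<in> borel_measurable (F (Suc k))" "v k \<in> borel_measurable (F (Suc k))"
      using wF vF by auto
    have "x (Suc k) = (\<lambda>\<omega>. closest_point X (x k \<omega> - \<gamma>x k *\<^sub>R (gradx (x k \<omega>) (\<theta> k \<omega>) + w k \<omega>)))"
      by (rule ext) (simp add: x_rec)
    moreover have "(\<lambda>\<omega>. closest_point X (x k \<omega> - \<gamma>x k *\<^sub>R (gradx (x k \<omega>) (\<theta> k \<omega>) + w k \<omega>))) \<in> borel_measurable (F (Suc k))"
      by (rule borel_measurable_continuous_on[OF cpX]) measurable
    moreover have "\<theta> (Suc k) = (\<lambda>\<omega>. closest_point \<Theta> (\<theta> k \<omega> - \<gamma>\<theta> k *\<^sub>R (gradg (\<theta> k \<omega>) + v k \<omega>)))"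
      by (rule ext) (simp add: \<theta>_rec)
    moreover have "(\<lambda>\<omega>. closest_point \<Theta> (\<theta> k \<omega> - \<gamma>\<theta> k *\<^sub>R (gradg (\<theta> k \<omega>) + v k \<omega>))) \<in> borel_measurable (F (Suc k))"
      by (rule borel_measurable_continuous_on[OF cpT]) measurable
    ultimately show ?case by simp
  qed
  have xF[measurable]: "x k \<in> borel_measurable (F k)" and tF[measurable]: "\<theta> k \<in> borel_measurable (F k)" for k
    using xtF by auto
  have gxF[measurable]: "(\<lambda>\<omega>. gradx (x k \<omega>) (\<theta> k \<omega>)) \<in> borel_measurable (F k)" for k
    by (rule gradxF) (auto simp: spF)
  have ggF[measurable]: "(\<lambda>\<omega>. gradg (\<theta> k \<omega>)) \<in> borel_measurable (F k)" for k
    by (rule gradgF) (auto simp: spF)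
  have aF[measurable]: "a k \<in> borel_measurable (F k)" for k unfolding a_def by measurable
  have bF[measurable]: "b k \<in> borel_measurable (F k)" for k unfolding b_def by measurable
  have VF[measurable]: "V k \<in> borel_measurable (F k)" for k unfolding V_def by measurable
  have \<xi>F: "\<xi> k \<in> borel_measurable (F (Suc k))" for k
  proof -
    have [measurable]: "a k \<in> borel_measurable (F (Suc k))" "b k \<in> borel_measurable (F (Suc k))"
      using mle[OF _ aF] mle[OF _ bF] by auto
    have [measurable]: "w k \<in> borel_measurable (F (Suc k))" "v k \<in> borel_measurable (F (Suc k))"
      using wF vF by auto
    show ?thesis unfolding \<xi>_def by measurable
  qed
  have wM[measurable]: "w k \<in> borel_measurable M" and vM[measurable]: "v k \<in> borel_measurable M" for k
    using w_meas v_meas by auto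
  have aM[measurable]: "a k \<in> borel_measurable M" and bM[measurable]: "b k \<in> borel_measurable M"
    and VM[measurable]: "V k \<in> borel_measurable M" and \<xi>M[measurable]: "\<xi> k \<in> borel_measurable M" for k
    using toM[OF aF] toM[OF bF] toM[OF VF] toM[OF \<xi>F] by auto
  define \<Gamma> where "\<Gamma> = (\<Sum>k. (\<gamma>x k)\<^sup>2)"
  have g\<Gamma>: "(\<gamma>x k)\<^sup>2 \<le> \<Gamma>" for k
    using sum_le_suminf[OF \<gamma>x_sq, of "{k}"] by (simp add: \<Gamma>_def)
  have \<Gamma>0: "\<Gamma> \<ge> 0" using g\<Gamma>[of 0] by (meson order_trans zero_le_power2)
  define Ca where "Ca = 3 + 3 * \<Gamma> * (Lx\<^sup>2 + L\<theta>\<^sup>2)"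
  define Cb where "Cb = 2 + 2 * (q\<^sup>2 * \<Gamma>) * C\<theta>\<^sup>2"
  have abound: "(norm (a k \<omega>))\<^sup>2 \<le> Ca * V k \<omega>" if \<omega>: "\<omega> \<in> space M" for k \<omega>
  proof -
    have XX: "x k \<omega> \<in> X" using xX[OF \<omega>] .
    have TT: "\<theta> k \<omega> \<in> \<Theta>" using \<theta>T[OF \<omega>] .
    have "a k \<omega> = (x k \<omega> - xs) - \<gamma>x k *\<^sub>R ((gradx (x k \<omega>) (\<theta> k \<omega>) - gradx xs (\<theta> k \<omega>)) + (gradx xs (\<theta> k \<omega>) - gradx xs \<theta>s))"
      by (simp add: a_def)
    also have "(norm \<dots>)\<^sup>2 \<le> Ca * ((norm (x k \<omega> - xs))\<^sup>2 + (norm (\<theta> k \<omega> - \<theta>s))\<^sup>2)"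
      unfolding Ca_def
      by (rule abound_gen[OF f_Lx[OF TT XX xsX] f_Lt[OF xsX TT \<theta>sT]]) (use \<gamma>x_pos g\<Gamma> in \<open>auto simp: less_imp_le\<close>)
    finally show ?thesis by (simp add: V_def)
  qed
  have bbound: "(norm (b k \<omega>))\<^sup>2 \<le> Cb * V k \<omega>" if \<omega>: "\<omega> \<in> space M" for k \<omega>
  proof -
    have TT: "\<theta> k \<omega> \<in> \<Theta>" using \<theta>T[OF \<omega>] .
    have s2: "(\<gamma>\<theta> k)\<^sup>2 \<le> q\<^sup>2 * \<Gamma>" using g\<Gamma>[of k] q0 by (simp add: \<gamma>\<theta>q power_mult_distrib)
    have "(norm (b k \<omega>))\<^sup>2 \<le> Cb * (norm (\<theta> k \<omega> - \<theta>s))\<^sup>2"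
      unfolding b_def Cb_def
      by (rule bbound_gen[OF g_C[OF TT \<theta>sT] _ s2]) (use \<gamma>\<theta>_pos in \<open>auto simp: less_imp_le\<close>)
    also have "\<dots> \<le> Cb * V k \<omega>" by (rule mult_left_mono) (use \<Gamma>0 in \<open>auto simp: V_def Cb_def\<close>)
    finally show ?thesis .
  qed
  have Ca0: "Ca \<ge> 0" using \<Gamma>0 by (simp add: Ca_def)
  have Cb0: "Cb \<ge> 0" using \<Gamma>0 by (simp add: Cb_def)
  have wv: "AE \<omega> in M. nn_cond_exp M (F k) (\<lambda>\<omega>. ennreal ((norm (w k \<omega>))\<^sup>2)) \<omega> \<le> ennreal (\<nu>x\<^sup>2)" for k
    using w_var by (simp add: F_def)
  have vv: "AE \<omega> in M. nn_cond_exp M (F k) (\<lambda>\<omega>. ennreal ((norm (v k \<omega>))\<^sup>2)) \<omega> \<le> ennreal (\<nu>\<theta>\<^sup>2)" for k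
    using v_var by (simp add: F_def)
  have one_int: "integrable M (\<lambda>\<omega>. 1::real)" by simp
  have wsq: "integrable M (\<lambda>\<omega>. (norm (w k \<omega>))\<^sup>2)" "(\<integral>\<omega>. (norm (w k \<omega>))\<^sup>2 \<partial>M) \<le> \<nu>x\<^sup>2" for k
    using cond_var_bound[OF sub[of k] wM wv[of k] _ _ one_int] by (auto simp: prob_space)
  have vsq: "integrable M (\<lambda>\<omega>. (norm (v k \<omega>))\<^sup>2)" "(\<integral>\<omega>. (norm (v k \<omega>))\<^sup>2 \<partial>M) \<le> \<nu>\<theta>\<^sup>2" for k
    using cond_var_bound[OF sub[of k] vM vv[of k] _ _ one_int] by (auto simp: prob_space)
  define Dn where "Dn = \<nu>x\<^sup>2 + q\<^sup>2 * \<nu>\<theta>\<^sup>2"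
  have \<beta>0: "\<beta> k \<omega> \<ge> 0" for k \<omega> by (simp add: \<beta>_def)
  have \<beta>int: "integrable M (\<beta> k)" for k unfolding \<beta>_def using wsq vsq by auto
  have \<beta>bound: "(\<integral>\<omega>. \<beta> k \<omega> \<partial>M) \<le> Dn * (\<gamma>x k)\<^sup>2" for k
  proof -
    have "(\<integral>\<omega>. \<beta> k \<omega> \<partial>M) = (\<gamma>x k)\<^sup>2 * (\<integral>\<omega>. (norm (w k \<omega>))\<^sup>2 \<partial>M) + (\<gamma>\<theta> k)\<^sup>2 * (\<integral>\<omega>. (norm (v k \<omega>))\<^sup>2 \<partial>M)"
      unfolding \<beta>_def using wsq vsq by simp
    also have "\<dots> \<le> (\<gamma>x k)\<^sup>2 * \<nu>x\<^sup>2 + (\<gamma>\<theta> k)\<^sup>2 * \<nu>\<theta>\<^sup>2"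
      using wsq vsq by (intro add_mono mult_left_mono) auto
    also have "\<dots> = Dn * (\<gamma>x k)\<^sup>2" by (simp add: Dn_def \<gamma>\<theta>q power_mult_distrib algebra_simps)
    finally show ?thesis .
  qed
  \<comment> \<open>localisation\<close>
  define B where "B R = {\<omega>\<in>space M. V 0 \<omega> \<le> real R}" for R :: nat
  have BF: "B R \<in> sets (F 0)" for R
  proof -
    have "{\<omega>\<in>space (F 0). V 0 \<omega> \<le> real R} \<in> sets (F 0)" by measurable
    then show ?thesis by (simp add: B_def spF)
  qed
  have indF[measurable]: "(\<lambda>\<omega>. indicator (B R) \<omega> :: real) \<in> borel_measurable (F k)" for R k
    using mle[of 0 k, OF _ borel_measurable_indicator[OF BF]] by simp
  have indM[measurable]: "(\<lambda>\<omega>. indicator (B R) \<omega> :: real) \<in> borel_measurable M" for R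
    using toM[OF indF] .
  define hR where "hR R k \<omega> = V k \<omega> * indicator (B R) \<omega>" for R k \<omega>
  define \<zeta> where "\<zeta> R k \<omega> = \<xi> k \<omega> * indicator (B R) \<omega>" for R k \<omega>
  have hRF[measurable]: "hR R k \<in> borel_measurable (F k)" for R k unfolding hR_def by measurable
  have hRM[measurable]: "hR R k \<in> borel_measurable M" for R k using toM[OF hRF] .
  have hR0: "hR R k \<omega> \<ge> 0" for R k \<omega> by (simp add: hR_def V0)
  have \<zeta>F: "\<zeta> R k \<in> borel_measurable (F (Suc k))" for R k
    unfolding \<zeta>_def using \<xi>F[of k] indF[of R "Suc k"] by (intro borel_measurable_times)
  have \<zeta>M[measurable]: "\<zeta> R k \<in> borel_measurable M" for R k using toM[OF \<zeta>F] .
  define Cz where "Cz = 8 * Ca * \<nu>x\<^sup>2 + 8 * q\<^sup>2 * Cb * \<nu>\<theta>\<^sup>2"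
  have xi2: "(\<xi> k \<omega>)\<^sup>2 \<le> 8 * (\<gamma>x k)\<^sup>2 * Ca * (V k \<omega> * (norm (w k \<omega>))\<^sup>2) + 8 * (\<gamma>\<theta> k)\<^sup>2 * Cb * (V k \<omega> * (norm (v k \<omega>))\<^sup>2)"
    if \<omega>: "\<omega> \<in> space M" for k \<omega>
  proof -
    have aw: "(a k \<omega> \<bullet> w k \<omega>)\<^sup>2 \<le> Ca * (V k \<omega> * (norm (w k \<omega>))\<^sup>2)"
    proof -
      have "\<bar>a k \<omega> \<bullet> w k \<omega>\<bar> \<le> \<bar>norm (a k \<omega>) * norm (w k \<omega>)\<bar>" using Cauchy_Schwarz_ineq2 by simp
      then have "(a k \<omega> \<bullet> w k \<omega>)\<^sup>2 \<le> (norm (a k \<omega>) * norm (w k \<omega>))\<^sup>2" by (simp only: abs_le_square_iff)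
      also have "\<dots> = (norm (a k \<omega>))\<^sup>2 * (norm (w k \<omega>))\<^sup>2" by (simp add: power_mult_distrib)
      also have "\<dots> \<le> (Ca * V k \<omega>) * (norm (w k \<omega>))\<^sup>2" by (rule mult_right_mono[OF abound[OF \<omega>]]) simp
      finally show ?thesis by (simp add: mult.assoc)
    qed
    have bv: "(b k \<omega> \<bullet> v k \<omega>)\<^sup>2 \<le> Cb * (V k \<omega> * (norm (v k \<omega>))\<^sup>2)"
    proof -
      have "\<bar>b k \<omega> \<bullet> v k \<omega>\<bar> \<le> \<bar>norm (b k \<omega>) * norm (v k \<omega>)\<bar>" using Cauchy_Schwarz_ineq2 by simp
      then have "(b k \<omega> \<bullet> v k \<omega>)\<^sup>2 \<le> (norm (b k \<omega>) * norm (v k \<omega>))\<^sup>2" by (simp only: abs_le_square_iff)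
      also have "\<dots> = (norm (b k \<omega>))\<^sup>2 * (norm (v k \<omega>))\<^sup>2" by (simp add: power_mult_distrib)
      also have "\<dots> \<le> (Cb * V k \<omega>) * (norm (v k \<omega>))\<^sup>2" by (rule mult_right_mono[OF bbound[OF \<omega>]]) simp
      finally show ?thesis by (simp add: mult.assoc)
    qed
    have "(\<xi> k \<omega>)\<^sup>2 \<le> 2 * ((- 2 * \<gamma>x k * (a k \<omega> \<bullet> w k \<omega>))\<^sup>2 + (- 2 * \<gamma>\<theta> k * (b k \<omega> \<bullet> v k \<omega>))\<^sup>2)"
      unfolding \<xi>_def using sq2 by (simp only: diff_conv_add_uminus mult_minus_left)
    also have "\<dots> = 8 * (\<gamma>x k)\<^sup>2 * (a k \<omega> \<bullet> w k \<omega>)\<^sup>2 + 8 * (\<gamma>\<theta> k)\<^sup>2 * (b k \<omega> \<bullet> v k \<omega>)\<^sup>2"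
      by (simp add: power_mult_distrib)
    also have "\<dots> \<le> 8 * (\<gamma>x k)\<^sup>2 * (Ca * (V k \<omega> * (norm (w k \<omega>))\<^sup>2)) + 8 * (\<gamma>\<theta> k)\<^sup>2 * (Cb * (V k \<omega> * (norm (v k \<omega>))\<^sup>2))"
      using aw bv by (intro add_mono mult_left_mono) auto
    finally show ?thesis by (simp add: mult.assoc)
  qed
  have s1: "integrable M (\<lambda>\<omega>. (\<zeta> R k \<omega>)\<^sup>2) \<and> (\<integral>\<omega>. (\<zeta> R k \<omega>)\<^sup>2 \<partial>M) \<le> Cz * (\<gamma>x k)\<^sup>2 * (\<integral>\<omega>. hR R k \<omega> \<partial>M)"
    if I: "integrable M (hR R k)" for R k
  proof -
    note cw = cond_var_bound[OF sub[of k] wM wv[of k] hRF[of R k] hR0 I]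
    note cv = cond_var_bound[OF sub[of k] vM vv[of k] hRF[of R k] hR0 I]
    define H where "H \<omega> = 8 * (\<gamma>x k)\<^sup>2 * Ca * (hR R k \<omega> * (norm (w k \<omega>))\<^sup>2) + 8 * (\<gamma>\<theta> k)\<^sup>2 * Cb * (hR R k \<omega> * (norm (v k \<omega>))\<^sup>2)" for \<omega>
    have Hi: "integrable M H" unfolding H_def using cw(1) cv(1) by auto
    have pw: "(\<zeta> R k \<omega>)\<^sup>2 \<le> H \<omega>" if \<omega>: "\<omega> \<in> space M" for \<omega>
    proof (cases "\<omega> \<in> B R")
      case True then show ?thesis using xi2[OF \<omega>, of k] by (simp add: \<zeta>_def H_def hR_def)
    next
      case False then show ?thesis using Ca0 Cb0 by (simp add: \<zeta>_def H_def hR_def)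
    qed
    note dom = int_dom[OF Hi _ _ pw]
    have i1: "integrable M (\<lambda>\<omega>. (\<zeta> R k \<omega>)\<^sup>2)" by (rule dom(1)) auto
    have "(\<integral>\<omega>. (\<zeta> R k \<omega>)\<^sup>2 \<partial>M) \<le> (\<integral>\<omega>. H \<omega> \<partial>M)" by (rule dom(2)) auto
    also have "(\<integral>\<omega>. H \<omega> \<partial>M) = 8 * (\<gamma>x k)\<^sup>2 * Ca * (\<integral>\<omega>. hR R k \<omega> * (norm (w k \<omega>))\<^sup>2 \<partial>M)
        + 8 * (\<gamma>\<theta> k)\<^sup>2 * Cb * (\<integral>\<omega>. hR R k \<omega> * (norm (v k \<omega>))\<^sup>2 \<partial>M)"
      unfolding H_def using cw(1) cv(1) by simp
    also have "\<dots> \<le> 8 * (\<gamma>x k)\<^sup>2 * Ca * (\<nu>x\<^sup>2 * (\<integral>\<omega>. hR R k \<omega> \<partial>M)) + 8 * (\<gamma>\<theta> k)\<^sup>2 * Cb * (\<nu>\<theta>\<^sup>2 * (\<integral>\<omega>. hR R k \<omega> \<partial>M))"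
      using cw(2) cv(2) Ca0 Cb0 by (intro add_mono mult_left_mono) auto
    also have "\<dots> = Cz * (\<gamma>x k)\<^sup>2 * (\<integral>\<omega>. hR R k \<omega> \<partial>M)"
      by (simp add: Cz_def \<gamma>\<theta>q power_mult_distrib algebra_simps)
    finally show ?thesis using i1 by simp
  qed
  have wm0: "AE \<omega> in M. real_cond_exp M (F k) (\<lambda>\<omega>. w k \<omega> \<bullet> i) \<omega> = 0" if "i \<in> Basis" for k i
    using w_mean[OF that] by (simp add: F_def)
  have vm0: "AE \<omega> in M. real_cond_exp M (F k) (\<lambda>\<omega>. v k \<omega> \<bullet> i) \<omega> = 0" if "i \<in> Basis" for k i
    using v_mean[OF that] by (simp add: F_def)
  have s2: "AE \<omega> in M. real_cond_exp M (F k) (\<zeta> R k) \<omega> = 0"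
    if I: "integrable M (hR R k)" for R k
  proof -
    define Ya where "Ya i \<omega> = - 2 * \<gamma>x k * (a k \<omega> \<bullet> i) * indicator (B R) \<omega>" for i \<omega>
    define Yb where "Yb i \<omega> = - 2 * \<gamma>\<theta> k * (b k \<omega> \<bullet> i) * indicator (B R) \<omega>" for i \<omega>
    have YaF[measurable]: "Ya i \<in> borel_measurable (F k)" for i unfolding Ya_def by measurable
    have YbF[measurable]: "Yb i \<in> borel_measurable (F k)" for i unfolding Yb_def by measurable
    have YaM[measurable]: "Ya i \<in> borel_measurable M" for i using toM[OF YaF] .
    have YbM[measurable]: "Yb i \<in> borel_measurable M" for i using toM[OF YbF] .
    define S1 where "S1 \<omega> = (\<Sum>i\<in>Basis. Ya i \<omega> * (w k \<omega> \<bullet> i))" for \<omega>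
    define S2 where "S2 \<omega> = (\<Sum>i\<in>Basis. Yb i \<omega> * (v k \<omega> \<bullet> i))" for \<omega>
    have e1: "S1 \<omega> = - 2 * \<gamma>x k * indicator (B R) \<omega> * (a k \<omega> \<bullet> w k \<omega>)" for \<omega>
      unfolding S1_def Ya_def euclidean_inner[of "a k \<omega>" "w k \<omega>"] by (simp add: sum_distrib_left mult_ac)
    have e2: "S2 \<omega> = - 2 * \<gamma>\<theta> k * indicator (B R) \<omega> * (b k \<omega> \<bullet> v k \<omega>)" for \<omega>
      unfolding S2_def Yb_def euclidean_inner[of "b k \<omega>" "v k \<omega>"] by (simp add: sum_distrib_left mult_ac)
    have zeq: "\<zeta> R k = (\<lambda>\<omega>. S1 \<omega> + S2 \<omega>)"
      by (rule ext) (simp add: e1 e2 \<zeta>_def \<xi>_def algebra_simps)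
    have hRi: "integrable M (\<lambda>\<omega>. c0 * hR R k \<omega>)" for c0 using I by simp
    have ia: "integrable M (\<lambda>\<omega>. Ya i \<omega> * (w k \<omega> \<bullet> i))" for i
    proof (rule sq_int_mult)
      show "integrable M (\<lambda>\<omega>. (Ya i \<omega>)\<^sup>2)"
      proof (rule int_dom(1)[OF hRi[of "4 * (\<gamma>x k)\<^sup>2 * (norm i)\<^sup>2 * Ca"]])
        fix \<omega> assume \<omega>: "\<omega> \<in> space M"
        have "(a k \<omega> \<bullet> i)\<^sup>2 \<le> (norm (a k \<omega>) * norm i)\<^sup>2"
          using Cauchy_Schwarz_ineq2[of "a k \<omega>" i] by (simp add: abs_le_square_iff[symmetric] abs_mult)
        also have "\<dots> = (norm (a k \<omega>))\<^sup>2 * (norm i)\<^sup>2" by (simp add: power_mult_distrib)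
        also have "\<dots> \<le> (Ca * V k \<omega>) * (norm i)\<^sup>2" by (rule mult_right_mono[OF abound[OF \<omega>]]) simp
        finally have "(a k \<omega> \<bullet> i)\<^sup>2 \<le> Ca * V k \<omega> * (norm i)\<^sup>2" .
        then have "4 * (\<gamma>x k)\<^sup>2 * (a k \<omega> \<bullet> i)\<^sup>2 \<le> 4 * (\<gamma>x k)\<^sup>2 * (Ca * V k \<omega> * (norm i)\<^sup>2)"
          by (intro mult_left_mono) auto
        then show "(Ya i \<omega>)\<^sup>2 \<le> 4 * (\<gamma>x k)\<^sup>2 * (norm i)\<^sup>2 * Ca * hR R k \<omega>"
          by (cases "\<omega> \<in> B R") (simp_all add: Ya_def hR_def power_mult_distrib mult_ac Ca0)
      qed auto
      show "integrable M (\<lambda>\<omega>. (w k \<omega> \<bullet> i)\<^sup>2)"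
      proof (rule int_dom(1)[where H = "\<lambda>\<omega>. (norm i)\<^sup>2 * (norm (w k \<omega>))\<^sup>2"])
        show "integrable M (\<lambda>\<omega>. (norm i)\<^sup>2 * (norm (w k \<omega>))\<^sup>2)" using wsq by simp
        fix \<omega>
        have "(w k \<omega> \<bullet> i)\<^sup>2 \<le> (norm (w k \<omega>) * norm i)\<^sup>2"
          using Cauchy_Schwarz_ineq2[of "w k \<omega>" i] by (simp add: abs_le_square_iff[symmetric] abs_mult)
        then show "(w k \<omega> \<bullet> i)\<^sup>2 \<le> (norm i)\<^sup>2 * (norm (w k \<omega>))\<^sup>2"
          by (simp add: power_mult_distrib mult.commute)
      qed auto
    qed auto
    have ib: "integrable M (\<lambda>\<omega>. Yb i \<omega> * (v k \<omega> \<bullet> i))" for i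
    proof (rule sq_int_mult)
      show "integrable M (\<lambda>\<omega>. (Yb i \<omega>)\<^sup>2)"
      proof (rule int_dom(1)[OF hRi[of "4 * (\<gamma>\<theta> k)\<^sup>2 * (norm i)\<^sup>2 * Cb"]])
        fix \<omega> assume \<omega>: "\<omega> \<in> space M"
        have "(b k \<omega> \<bullet> i)\<^sup>2 \<le> (norm (b k \<omega>) * norm i)\<^sup>2"
          using Cauchy_Schwarz_ineq2[of "b k \<omega>" i] by (simp add: abs_le_square_iff[symmetric] abs_mult)
        also have "\<dots> = (norm (b k \<omega>))\<^sup>2 * (norm i)\<^sup>2" by (simp add: power_mult_distrib)
        also have "\<dots> \<le> (Cb * V k \<omega>) * (norm i)\<^sup>2" by (rule mult_right_mono[OF bbound[OF \<omega>]]) simp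
        finally have "(b k \<omega> \<bullet> i)\<^sup>2 \<le> Cb * V k \<omega> * (norm i)\<^sup>2" .
        then have "4 * (\<gamma>\<theta> k)\<^sup>2 * (b k \<omega> \<bullet> i)\<^sup>2 \<le> 4 * (\<gamma>\<theta> k)\<^sup>2 * (Cb * V k \<omega> * (norm i)\<^sup>2)"
          by (intro mult_left_mono) auto
        then show "(Yb i \<omega>)\<^sup>2 \<le> 4 * (\<gamma>\<theta> k)\<^sup>2 * (norm i)\<^sup>2 * Cb * hR R k \<omega>"
          by (cases "\<omega> \<in> B R") (simp_all add: Yb_def hR_def power_mult_distrib mult_ac Cb0)
      qed auto
      show "integrable M (\<lambda>\<omega>. (v k \<omega> \<bullet> i)\<^sup>2)"
      proof (rule int_dom(1)[where H = "\<lambda>\<omega>. (norm i)\<^sup>2 * (norm (v k \<omega>))\<^sup>2"])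
        show "integrable M (\<lambda>\<omega>. (norm i)\<^sup>2 * (norm (v k \<omega>))\<^sup>2)" using vsq by simp
        fix \<omega>
        have "(v k \<omega> \<bullet> i)\<^sup>2 \<le> (norm (v k \<omega>) * norm i)\<^sup>2"
          using Cauchy_Schwarz_ineq2[of "v k \<omega>" i] by (simp add: abs_le_square_iff[symmetric] abs_mult)
        then show "(v k \<omega> \<bullet> i)\<^sup>2 \<le> (norm i)\<^sup>2 * (norm (v k \<omega>))\<^sup>2"
          by (simp add: power_mult_distrib mult.commute)
      qed auto
    qed auto
    have iS1: "integrable M S1" unfolding S1_def using ia by auto
    have iS2: "integrable M S2" unfolding S2_def using ib by auto
    note sfk = sub[of k]
    have A1: "AE \<omega> in M. real_cond_exp M (F k) (\<lambda>\<omega>. S1 \<omega> + S2 \<omega>) \<omega> = real_cond_exp M (F k) S1 \<omega> + real_cond_exp M (F k) S2 \<omega>"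
      by (rule sigma_finite_subalgebra.real_cond_exp_add[OF sfk iS1 iS2])
    have A2: "AE \<omega> in M. real_cond_exp M (F k) S1 \<omega> = (\<Sum>i\<in>Basis. real_cond_exp M (F k) (\<lambda>\<omega>. Ya i \<omega> * (w k \<omega> \<bullet> i)) \<omega>)"
      unfolding S1_def by (rule sigma_finite_subalgebra.real_cond_exp_sum[OF sfk ia])
    have A3: "AE \<omega> in M. real_cond_exp M (F k) S2 \<omega> = (\<Sum>i\<in>Basis. real_cond_exp M (F k) (\<lambda>\<omega>. Yb i \<omega> * (v k \<omega> \<bullet> i)) \<omega>)"
      unfolding S2_def by (rule sigma_finite_subalgebra.real_cond_exp_sum[OF sfk ib])
    have A4: "AE \<omega> in M. \<forall>i\<in>Basis. real_cond_exp M (F k) (\<lambda>\<omega>. Ya i \<omega> * (w k \<omega> \<bullet> i)) \<omega> = Ya i \<omega> * real_cond_exp M (F k) (\<lambda>\<omega>. w k \<omega> \<bullet> i) \<omega>"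
      by (rule AE_finite_allI) (auto intro!: sigma_finite_subalgebra.real_cond_exp_mult[OF sfk] ia)
    have A5: "AE \<omega> in M. \<forall>i\<in>Basis. real_cond_exp M (F k) (\<lambda>\<omega>. Yb i \<omega> * (v k \<omega> \<bullet> i)) \<omega> = Yb i \<omega> * real_cond_exp M (F k) (\<lambda>\<omega>. v k \<omega> \<bullet> i) \<omega>"
      by (rule AE_finite_allI) (auto intro!: sigma_finite_subalgebra.real_cond_exp_mult[OF sfk] ib)
    have A6: "AE \<omega> in M. \<forall>i\<in>Basis. real_cond_exp M (F k) (\<lambda>\<omega>. w k \<omega> \<bullet> i) \<omega> = 0"
      by (rule AE_finite_allI) (auto intro: wm0)
    have A7: "AE \<omega> in M. \<forall>i\<in>Basis. real_cond_exp M (F k) (\<lambda>\<omega>. v k \<omega> \<bullet> i) \<omega> = 0"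
      by (rule AE_finite_allI) (auto intro: vm0)
    show ?thesis unfolding zeq using A1 A2 A3 A4 A5 A6 A7 by eventually_elim simp
  qed
  have s3: "integrable M (hR R (Suc k)) \<and> (\<integral>\<omega>. hR R (Suc k) \<omega> \<partial>M) \<le> (1 + K * (\<gamma>x k)\<^sup>2) * (\<integral>\<omega>. hR R k \<omega> \<partial>M) + Dn * (\<gamma>x k)\<^sup>2"
    if I: "integrable M (hR R k)" for R k
  proof -
    have zsq: "integrable M (\<lambda>\<omega>. (\<zeta> R k \<omega>)\<^sup>2)" using s1[OF I] by simp
    have zi: "integrable M (\<zeta> R k)"
      using sq_int_mult[of M "\<lambda>_. 1" "\<zeta> R k", OF _ zsq] by simp
    have "(\<integral>\<omega>. real_cond_exp M (F k) (\<zeta> R k) \<omega> \<partial>M) = (\<integral>\<omega>. \<zeta> R k \<omega> \<partial>M)"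
      by (rule sigma_finite_subalgebra.real_cond_exp_int(2)[OF sub zi])
    moreover have "(\<integral>\<omega>. real_cond_exp M (F k) (\<zeta> R k) \<omega> \<partial>M) = (\<integral>\<omega>. 0 \<partial>M)"
      by (rule integral_cong_AE) (use s2[OF I] in auto)
    ultimately have z0: "(\<integral>\<omega>. \<zeta> R k \<omega> \<partial>M) = 0" by simp
    define H where "H \<omega> = (1 + K * (\<gamma>x k)\<^sup>2) * hR R k \<omega> + \<zeta> R k \<omega> + \<beta> k \<omega>" for \<omega>
    have Hi: "integrable M H" unfolding H_def using I zi \<beta>int by auto
    have pw: "hR R (Suc k) \<omega> \<le> H \<omega>" if \<omega>: "\<omega> \<in> space M" for \<omega>
    proof (cases "\<omega> \<in> B R")
      case True
      have "c * \<gamma>x k * V k \<omega> \<ge> 0" using c0 \<gamma>x_pos[of k] V0[of k \<omega>] by simp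
      then show ?thesis using True path[OF \<omega>, of k] by (simp add: H_def hR_def \<zeta>_def algebra_simps)
    next
      case False then show ?thesis using \<beta>0[of k \<omega>] by (simp add: H_def hR_def \<zeta>_def)
    qed
    note dom = int_dom[OF Hi hRM hR0 pw]
    have "(\<integral>\<omega>. H \<omega> \<partial>M) = (1 + K * (\<gamma>x k)\<^sup>2) * (\<integral>\<omega>. hR R k \<omega> \<partial>M) + (\<integral>\<omega>. \<zeta> R k \<omega> \<partial>M) + (\<integral>\<omega>. \<beta> k \<omega> \<partial>M)"
      unfolding H_def using I zi \<beta>int by simp
    then have "(\<integral>\<omega>. H \<omega> \<partial>M) \<le> (1 + K * (\<gamma>x k)\<^sup>2) * (\<integral>\<omega>. hR R k \<omega> \<partial>M) + Dn * (\<gamma>x k)\<^sup>2"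
      using z0 \<beta>bound[of k] by simp
    then show ?thesis using dom by simp
  qed
  define sg where "sg k = (\<Sum>j<k. (\<gamma>x j)\<^sup>2)" for k
  have sg0: "sg k \<ge> 0" for k by (simp add: sg_def sum_nonneg)
  have Dn0: "Dn \<ge> 0" by (simp add: Dn_def)
  have ub: "integrable M (hR R k) \<and> (\<integral>\<omega>. hR R k \<omega> \<partial>M) \<le> (real R + Dn * sg k) * exp (K * sg k)" for R k
  proof (induction k)
    case 0
    have pw: "hR R 0 \<omega> \<le> real R" if "\<omega> \<in> space M" for \<omega>
      using that by (cases "\<omega> \<in> B R") (auto simp: hR_def B_def)
    note dom = int_dom[of M "\<lambda>_. real R", OF _ hRM hR0 pw]
    show ?case using dom by (simp add: sg_def prob_space)
  next
    case (Suc k)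
    let ?u = "\<integral>\<omega>. hR R k \<omega> \<partial>M" and ?g = "(\<gamma>x k)\<^sup>2"
    have IH: "integrable M (hR R k)" "?u \<le> (real R + Dn * sg k) * exp (K * sg k)" using Suc by auto
    have st: "integrable M (hR R (Suc k))" "(\<integral>\<omega>. hR R (Suc k) \<omega> \<partial>M) \<le> (1 + K * ?g) * ?u + Dn * ?g"
      using s3[OF IH(1)] by auto
    have sgS: "sg (Suc k) = sg k + ?g" by (simp add: sg_def)
    have P0: "0 \<le> (real R + Dn * sg k) * exp (K * sg k)" using Dn0 sg0 by simp
    have "(1 + K * ?g) * ?u \<le> (1 + K * ?g) * ((real R + Dn * sg k) * exp (K * sg k))"
      using IH(2) K0 by (intro mult_left_mono) auto
    also have "\<dots> \<le> exp (K * ?g) * ((real R + Dn * sg k) * exp (K * sg k))"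
      by (rule mult_right_mono[OF exp_ge_add_one_self P0])
    also have "\<dots> = (real R + Dn * sg k) * exp (K * sg (Suc k))"
      by (simp add: sgS distrib_left exp_add)
    finally have t1: "(1 + K * ?g) * ?u \<le> (real R + Dn * sg k) * exp (K * sg (Suc k))" .
    have t2: "Dn * ?g \<le> Dn * ?g * exp (K * sg (Suc k))"
    proof -
      have e1: "1 \<le> exp (K * sg (Suc k))" using K0 sg0[of "Suc k"] by simp
      have "0 \<le> Dn * ?g" using Dn0 by simp
      from mult_left_mono[OF e1 this] show ?thesis by simp
    qed
    have "(\<integral>\<omega>. hR R (Suc k) \<omega> \<partial>M) \<le> (real R + Dn * sg k) * exp (K * sg (Suc k)) + Dn * ?g * exp (K * sg (Suc k))"
      using st(2) t1 t2 by linarith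
    also have "\<dots> = (real R + Dn * sg (Suc k)) * exp (K * sg (Suc k))" by (simp add: sgS algebra_simps)
    finally show ?case using st(1) by simp
  qed
  have sg\<Gamma>: "sg k \<le> \<Gamma>" for k unfolding sg_def \<Gamma>_def by (rule sum_le_suminf[OF \<gamma>x_sq]) auto
  define U where "U R = (real R + Dn * \<Gamma>) * exp (K * \<Gamma>)" for R :: nat
  have ub2: "(\<integral>\<omega>. hR R k \<omega> \<partial>M) \<le> U R" for R k
  proof -
    have "(real R + Dn * sg k) * exp (K * sg k) \<le> (real R + Dn * \<Gamma>) * exp (K * \<Gamma>)"
      using sg\<Gamma>[of k] Dn0 K0 sg0[of k] \<Gamma>0
      by (intro mult_mono add_left_mono mult_left_mono) (auto simp: mult_left_mono)
    then show ?thesis using ub[of R k] by (simp add: U_def)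
  qed
  have Cz0: "Cz \<ge> 0" using Ca0 Cb0 by (simp add: Cz_def)
  have mart: "AE \<omega> in M. summable (\<lambda>k. \<zeta> R k \<omega>)" for R
  proof (rule mart_summable[where M=M and F=F and \<zeta>="\<zeta> R", OF M sub mono \<zeta>F])
    show "integrable M (\<lambda>\<omega>. (\<zeta> R k \<omega>)\<^sup>2)" for k using s1[OF ub[THEN conjunct1]] by simp
    show "AE \<omega> in M. real_cond_exp M (F k) (\<zeta> R k) \<omega> = 0" for k using s2[OF ub[THEN conjunct1]] by simp
    show "summable (\<lambda>k. \<integral>\<omega>. (\<zeta> R k \<omega>)\<^sup>2 \<partial>M)"
    proof (rule summable_comparison_test'[where g = "\<lambda>k. Cz * U R * (\<gamma>x k)\<^sup>2" and N = 0])
      show "summable (\<lambda>k. Cz * U R * (\<gamma>x k)\<^sup>2)" by (rule summable_mult[OF \<gamma>x_sq])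
      fix k :: nat
      have "(\<integral>\<omega>. (\<zeta> R k \<omega>)\<^sup>2 \<partial>M) \<le> Cz * (\<gamma>x k)\<^sup>2 * (\<integral>\<omega>. hR R k \<omega> \<partial>M)"
        using s1[OF ub[THEN conjunct1]] by simp
      also have "\<dots> \<le> Cz * (\<gamma>x k)\<^sup>2 * U R" using ub2 Cz0 by (intro mult_left_mono) auto
      finally show "norm (\<integral>\<omega>. (\<zeta> R k \<omega>)\<^sup>2 \<partial>M) \<le> Cz * U R * (\<gamma>x k)\<^sup>2"
        by (simp add: mult_ac)
    qed
  qed
  have martall: "AE \<omega> in M. \<forall>R. summable (\<lambda>k. \<zeta> R k \<omega>)"
    by (rule AE_all_countable[THEN iffD2]) (use mart in auto)
  have \<beta>sum: "AE \<omega> in M. summable (\<lambda>k. \<beta> k \<omega>)"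
  proof -
    have \<beta>M[measurable]: "\<beta> k \<in> borel_measurable M" for k unfolding \<beta>_def by measurable
    have "(\<integral>\<^sup>+\<omega>. (\<Sum>k. ennreal (\<beta> k \<omega>)) \<partial>M) = (\<Sum>k. \<integral>\<^sup>+\<omega>. ennreal (\<beta> k \<omega>) \<partial>M)"
      by (rule nn_integral_suminf) measurable
    also have "\<dots> \<le> (\<Sum>k. ennreal (Dn * (\<gamma>x k)\<^sup>2))"
    proof (rule suminf_le)
      fix k
      have "(\<integral>\<^sup>+\<omega>. ennreal (\<beta> k \<omega>) \<partial>M) = ennreal (\<integral>\<omega>. \<beta> k \<omega> \<partial>M)"
        by (rule nn_integral_eq_integral[OF \<beta>int]) (use \<beta>0 in auto)
      also have "\<dots> \<le> ennreal (Dn * (\<gamma>x k)\<^sup>2)" using \<beta>bound[of k] by (rule ennreal_leI)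
      finally show "(\<integral>\<^sup>+\<omega>. ennreal (\<beta> k \<omega>) \<partial>M) \<le> ennreal (Dn * (\<gamma>x k)\<^sup>2)" .
    qed auto
    also have "\<dots> = ennreal (\<Sum>k. Dn * (\<gamma>x k)\<^sup>2)"
      by (rule suminf_ennreal2) (use Dn0 summable_mult[OF \<gamma>x_sq, of Dn] in auto)
    finally have "(\<integral>\<^sup>+\<omega>. (\<Sum>k. ennreal (\<beta> k \<omega>)) \<partial>M) \<noteq> \<infinity>"
      using ennreal_less_top[of "\<Sum>k. Dn * (\<gamma>x k)\<^sup>2"] by (auto simp: top_unique)
    then have "AE \<omega> in M. (\<Sum>k. ennreal (\<beta> k \<omega>)) \<noteq> \<infinity>"
      by (intro nn_integral_noteq_infinite) measurable
    then show ?thesis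
    proof eventually_elim
      case (elim \<omega>)
      then show ?case by (intro summable_suminf_not_top) (auto simp: \<beta>0)
    qed
  qed
  have conv: "AE \<omega> in M. (\<lambda>k. x k \<omega>) \<longlonglongrightarrow> xs \<and> (\<lambda>k. \<theta> k \<omega>) \<longlonglongrightarrow> \<theta>s"
    using martall \<beta>sum AE_space
  proof eventually_elim
    case (elim \<omega>)
    then have \<omega>: "\<omega> \<in> space M" and sz: "\<And>R. summable (\<lambda>k. \<zeta> R k \<omega>)" and sb: "summable (\<lambda>k. \<beta> k \<omega>)"
      by auto
    define R where "R = nat \<lceil>V 0 \<omega>\<rceil>"
    have "\<omega> \<in> B R" using \<omega> real_nat_ceiling_ge[of "V 0 \<omega>"] by (simp add: B_def R_def)
    then have "(\<lambda>k. \<zeta> R k \<omega>) = (\<lambda>k. \<xi> k \<omega>)" by (simp add: \<zeta>_def)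
    with sz[of R] have sxi: "summable (\<lambda>k. \<xi> k \<omega>)" by simp
    have Vlim: "(\<lambda>k. V k \<omega>) \<longlonglongrightarrow> 0"
      by (rule det_RS[OF V0 \<gamma>x_pos c0 \<gamma>x_sum \<gamma>x_sq sxi sb path[OF \<omega>]])
    have sV: "(\<lambda>k. sqrt (V k \<omega>)) \<longlonglongrightarrow> 0" using tendsto_real_sqrt[OF Vlim] by simp
    have "(\<lambda>k. x k \<omega> - xs) \<longlonglongrightarrow> 0"
    proof (rule Lim_null_comparison[OF _ sV])
      show "\<forall>\<^sub>F k in sequentially. norm (x k \<omega> - xs) \<le> sqrt (V k \<omega>)"
        by (intro always_eventually allI real_le_rsqrt) (simp add: V_def)
    qed
    moreover have "(\<lambda>k. \<theta> k \<omega> - \<theta>s) \<longlonglongrightarrow> 0"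
    proof (rule Lim_null_comparison[OF _ sV])
      show "\<forall>\<^sub>F k in sequentially. norm (\<theta> k \<omega> - \<theta>s) \<le> sqrt (V k \<omega>)"
        by (intro always_eventually allI real_le_rsqrt) (simp add: V_def)
    qed
    ultimately show ?case by (simp add: LIM_zero_cancel)
  qed
  show ?thesis using \<theta>sT \<theta>smin \<theta>sun xsX xsmin xsun conv by blast
qed

end
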